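(* Let $E$ be a real Banach space. Then every non-degenerate order interval $[f,g]=\{h\in FBL[E]: f\le h\le g\}$ of $FBL[E]$ (where $f,g\in FBL[E]$, $f\le g$, $f\ne g$) has density character equal to the density character of $E$.
   Context: The density character of a topological space is the least cardinality of a dense subset. For a real Banach space $E$ with dual $E^*$ and closed unit ball $B_E$, let $H[E]$ be the vector space of all positively homogeneous functions $f:E^*\to\mathbb R$ (i.e. $f(\lambda x^* )=\lambda f(x^* )$ for all $\lambda>0$). For $f\in H[E]$ put $\|f\|_{FBL[E]}:=\sup\{\sum_{k=1}^n|f(x_k^* )| : n\in\mathbb N,\ x_1^*,\dots,x_n^*\in E^*,\ \sup_{x\in B_E}\sum_{k=1}^n|x_k^*(x)|\le 1\}$. $H_0[E]:=\{f\in H[E]:\|f\|_{FBL[E]}<\infty\}$ is a Banach lattice with this norm and pointwise order/operations. For $x\in E$ let $\delta_x(x^* )=x^*(x)$. $FBL[E]$ is the closed sublattice of $H_0[E]$ generated by $\{\delta_x:x\in E\}$. *)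

theory Defs
  imports "HOL-Analysis.Analysis"
begin

definition dense_wrt :: "('b \<Rightarrow> 'b \<Rightarrow> real) \<Rightarrow> 'b set \<Rightarrow> 'b set \<Rightarrow> bool" where
  "dense_wrt d S D \<longleftrightarrow> D \<subseteq> S \<and> (\<forall>x\<in>S. \<forall>e>0. \<exists>y\<in>D. d x y < e)"

text \<open>D is a dense subset of S of least cardinality (so card_of D is the density character).\<close>
definition density_witness :: "('b \<Rightarrow> 'b \<Rightarrow> real) \<Rightarrow> 'b set \<Rightarrow> 'b set \<Rightarrow> bool" where
  "density_witness d S D \<longleftrightarrow> dense_wrt d S D \<and>
     (\<forall>D'. dense_wrt d S D' \<longrightarrow> (card_of D, card_of D') \<in> ordLeq)"

definition same_density ::
  "('b \<Rightarrow> 'b \<Rightarrow> real) \<Rightarrow> 'b set \<Rightarrow> ('c \<Rightarrow> 'c \<Rightarrow> real) \<Rightarrow> 'c set \<Rightarrow> bool" where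
  "same_density d1 S d2 T \<longleftrightarrow>
     (\<exists>D1 D2. density_witness d1 S D1 \<and> density_witness d2 T D2 \<and> (card_of D1, card_of D2) \<in> ordIso)"

text \<open>Free Banach lattice FBL[E]: functions on the dual E* (bounded linear functionals).\<close>

definition pos_homogeneous :: "(('a::real_normed_vector \<Rightarrow>\<^sub>L real) \<Rightarrow> real) \<Rightarrow> bool" where
  "pos_homogeneous f \<longleftrightarrow> (\<forall>t::real. \<forall>x. t > 0 \<longrightarrow> f (t *\<^sub>R x) = t * f x)"

definition fbl_sums :: "(('a::real_normed_vector \<Rightarrow>\<^sub>L real) \<Rightarrow> real) \<Rightarrow> real set" where
  "fbl_sums f = {(\<Sum>k<n. \<bar>f (xs k)\<bar>) | (n::nat) (xs::nat \<Rightarrow> ('a \<Rightarrow>\<^sub>L real)).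
      \<forall>x::'a. norm x \<le> 1 \<longrightarrow> (\<Sum>k<n. \<bar>blinfun_apply (xs k) x\<bar>) \<le> 1}"

definition fbl_norm :: "(('a::real_normed_vector \<Rightarrow>\<^sub>L real) \<Rightarrow> real) \<Rightarrow> real" where
  "fbl_norm f = Sup (fbl_sums f)"

definition H0 :: "(('a::real_normed_vector \<Rightarrow>\<^sub>L real) \<Rightarrow> real) set" where
  "H0 = {f. pos_homogeneous f \<and> bdd_above (fbl_sums f)}"

definition fbl_dist ::
  "(('a::real_normed_vector \<Rightarrow>\<^sub>L real) \<Rightarrow> real) \<Rightarrow> (('a \<Rightarrow>\<^sub>L real) \<Rightarrow> real) \<Rightarrow> real" where
  "fbl_dist f g = fbl_norm (\<lambda>x. f x - g x)"

definition delta :: "'a::real_normed_vector \<Rightarrow> ('a \<Rightarrow>\<^sub>L real) \<Rightarrow> real" where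
  "delta x = (\<lambda>xs. blinfun_apply xs x)"

definition closed_sublattice_gen :: "(('a::real_normed_vector \<Rightarrow>\<^sub>L real) \<Rightarrow> real) set \<Rightarrow> bool" where
  "closed_sublattice_gen S \<longleftrightarrow> S \<subseteq> H0 \<and> (\<forall>x. delta x \<in> S) \<and>
     (\<forall>f\<in>S. \<forall>g\<in>S. (\<lambda>y. f y + g y) \<in> S) \<and>
     (\<forall>f\<in>S. \<forall>c::real. (\<lambda>y. c * f y) \<in> S) \<and>
     (\<forall>f\<in>S. \<forall>g\<in>S. (\<lambda>y. max (f y) (g y)) \<in> S \<and> (\<lambda>y. min (f y) (g y)) \<in> S) \<and>
     (\<forall>s h. (\<forall>n. s n \<in> S) \<and> h \<in> H0 \<and> (\<lambda>n. fbl_dist (s n) h) \<longlonglongrightarrow> 0 \<longrightarrow> h \<in> S)"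

definition FBL :: "(('a::real_normed_vector \<Rightarrow>\<^sub>L real) \<Rightarrow> real) set" where
  "FBL = \<Inter> {S. closed_sublattice_gen S}"

definition order_interval ::
  "(('a::real_normed_vector \<Rightarrow>\<^sub>L real) \<Rightarrow> real) \<Rightarrow> (('a \<Rightarrow>\<^sub>L real) \<Rightarrow> real) \<Rightarrow> (('a \<Rightarrow>\<^sub>L real) \<Rightarrow> real) set" where
  "order_interval f g = {h \<in> FBL. f \<le> h \<and> h \<le> g}"

end

theory Submission
  imports Defs
begin

unbundle cardinal_syntax


lemma arch2: assumes "(e::real) > 0" shows "\<exists>n::nat. 2 / (real n + 1) < e"
proof -
  obtain n :: nat where n: "2 / e < real n" using reals_Archimedean2 by blast
  have "2 < e * real n" using n assms by (simp add: field_simps)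
  hence "2 < e * (real n + 1)" using assms by (simp add: algebra_simps)
  hence "2 / (real n + 1) < e" by (simp add: divide_less_eq)
  thus ?thesis by blast
qed

lemma witness_exists:
  assumes "\<And>x. x \<in> S \<Longrightarrow> d x x = 0"
  shows "\<exists>D. density_witness d S D"
proof -
  have fbl_SS: "dense_wrt d S S" unfolding dense_wrt_def using assms by force
  let ?R = "{|D| | D. dense_wrt d S D}"
  have "?R \<noteq> {}" using fbl_SS by blast
  moreover have "\<forall>r\<in>?R. Card_order r" using card_of_Card_order by blast
  ultimately obtain r where r: "r \<in> ?R" "\<forall>r'\<in>?R. r \<le>o r'"
    using exists_minim_Card_order[of ?R] by blast
  then obtain D where "r = |D|" "dense_wrt d S D" by blast
  then show ?thesis using r unfolding density_witness_def by blast
qed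

lemma witness_min:
  "density_witness d S D \<Longrightarrow> dense_wrt d S D' \<Longrightarrow> |D| \<le>o |D'|"
  unfolding density_witness_def by blast

lemma hereditary:
  assumes approx: "\<And>a e. a \<in> A \<Longrightarrow> e > 0 \<Longrightarrow> \<exists>q\<in>G. d a q < e"
    and tri: "\<And>x y z. x \<in> A \<Longrightarrow> y \<in> A \<Longrightarrow> z \<in> G \<Longrightarrow> d x y \<le> d x z + d y z"
  shows "\<exists>D. dense_wrt d A D \<and> |D| \<le>o |G \<times> (UNIV::nat set)|"
proof -
  define P where "P = (\<lambda>(q,n::nat) a. a \<in> A \<and> d a q < 1 / (real n + 1))"
  have Pq: "\<And>q n a. P (q,n) a \<longleftrightarrow> a \<in> A \<and> d a q < 1 / (real n + 1)" unfolding P_def by simp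
  define K where "K = {p \<in> G \<times> (UNIV::nat set). \<exists>a. P p a}"
  define pick where "pick = (\<lambda>p. SOME a. P p a)"
  have pk: "P p (pick p)" if "p \<in> K" for p
  proof -
    have "\<exists>a. P p a" using that unfolding K_def by blast
    thus ?thesis unfolding pick_def by (rule someI_ex)
  qed
  define D where "D = pick ` K"
  have "D \<subseteq> A"
  proof
    fix a assume "a \<in> D"
    then obtain q n where "(q,n) \<in> K" "a = pick (q,n)" unfolding D_def by auto
    thus "a \<in> A" using pk Pq by blast
  qed
  moreover have "\<exists>y\<in>D. d x y < e" if x: "x \<in> A" and e: "e > 0" for x e
  proof -
    obtain n :: nat where n: "2 / (real n + 1) < e" using arch2[OF e] by blast
    have "1 / (real n + 1) > 0" by simp
    then obtain q where q: "q \<in> G" "d x q < 1 / (real n + 1)" using approx[OF x] by blast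
    hence K: "(q,n) \<in> K" unfolding K_def using x Pq by blast
    hence "P (q,n) (pick (q,n))" by (rule pk)
    hence pa: "pick (q,n) \<in> A" "d (pick (q,n)) q < 1 / (real n + 1)" by (auto simp: Pq)
    have "d x (pick (q,n)) \<le> d x q + d (pick (q,n)) q" using tri[OF x pa(1) q(1)] .
    also have "\<dots> < 2 / (real n + 1)" using q(2) pa(2) by (simp add: field_simps)
    finally have "d x (pick (q,n)) < e" using n by linarith
    moreover have "pick (q,n) \<in> D" unfolding D_def using K by blast
    ultimately show ?thesis by blast
  qed
  ultimately have "dense_wrt d A D" unfolding dense_wrt_def by blast
  moreover have "|D| \<le>o |G \<times> (UNIV::nat set)|"
  proof -
    have "|D| \<le>o |K|" unfolding D_def by (rule card_of_image)
    moreover have "|K| \<le>o |G \<times> (UNIV::nat set)|" unfolding K_def by (rule card_of_mono1) auto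
    ultimately show ?thesis using ordLeq_transitive by blast
  qed
  ultimately show ?thesis by blast
qed

lemma pullback:
  fixes phi :: "'a::metric_space \<Rightarrow> 'b"
  assumes c: "c > 0"
    and bi: "\<And>x y. x \<in> B \<Longrightarrow> y \<in> B \<Longrightarrow> c * dist x y \<le> d (phi x) (phi y)"
    and into: "phi ` B \<subseteq> A"
    and dense: "dense_wrt d A DA"
    and tri: "\<And>x y z. x \<in> A \<Longrightarrow> y \<in> A \<Longrightarrow> z \<in> A \<Longrightarrow> d x y \<le> d x z + d y z"
  shows "\<exists>T. T \<subseteq> B \<and> (\<forall>x\<in>B. \<forall>e>0. \<exists>y\<in>T. dist x y < e) \<and> |T| \<le>o |DA \<times> (UNIV::nat set)|"
proof -
  define P where "P = (\<lambda>(q,n::nat) a. a \<in> B \<and> d (phi a) q < 1 / (real n + 1))"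
  have Pq: "\<And>q n a. P (q,n) a \<longleftrightarrow> a \<in> B \<and> d (phi a) q < 1 / (real n + 1)" unfolding P_def by simp
  define K where "K = {p \<in> DA \<times> (UNIV::nat set). \<exists>a. P p a}"
  define pick where "pick = (\<lambda>p. SOME a. P p a)"
  have pk: "P p (pick p)" if "p \<in> K" for p
  proof -
    have "\<exists>a. P p a" using that unfolding K_def by blast
    thus ?thesis unfolding pick_def by (rule someI_ex)
  qed
  define T where "T = pick ` K"
  have DA: "DA \<subseteq> A" "\<And>x e. x \<in> A \<Longrightarrow> e > 0 \<Longrightarrow> \<exists>y\<in>DA. d x y < e"
    using dense unfolding dense_wrt_def by auto
  have "T \<subseteq> B"
  proof
    fix a assume "a \<in> T"
    then obtain q n where "(q,n) \<in> K" "a = pick (q,n)" unfolding T_def by auto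
    thus "a \<in> B" using pk Pq by blast
  qed
  moreover have "\<exists>y\<in>T. dist x y < e" if x: "x \<in> B" and e: "e > 0" for x e
  proof -
    have ce: "c * e > 0" using c e by simp
    obtain n :: nat where n: "2 / (real n + 1) < c * e" using arch2[OF ce] by blast
    have phx: "phi x \<in> A" using into x by blast
    have "1 / (real n + 1) > 0" by simp
    then obtain q where q: "q \<in> DA" "d (phi x) q < 1 / (real n + 1)" using DA(2)[OF phx] by blast
    hence K: "(q,n) \<in> K" unfolding K_def using x Pq by blast
    hence "P (q,n) (pick (q,n))" by (rule pk)
    hence pa: "pick (q,n) \<in> B" "d (phi (pick (q,n))) q < 1 / (real n + 1)" by (auto simp: Pq)
    have "d (phi x) (phi (pick (q,n))) \<le> d (phi x) q + d (phi (pick (q,n))) q"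
      using tri[OF phx _ ] pa(1) into q(1) DA(1) by blast
    also have "\<dots> < 2 / (real n + 1)" using q(2) pa(2) by (simp add: field_simps)
    finally have "c * dist x (pick (q,n)) < c * e" using n bi[OF x pa(1)] by linarith
    hence "dist x (pick (q,n)) < e" using c by simp
    moreover have "pick (q,n) \<in> T" unfolding T_def using K by blast
    ultimately show ?thesis by blast
  qed
  moreover have "|T| \<le>o |DA \<times> (UNIV::nat set)|"
  proof -
    have "|T| \<le>o |K|" unfolding T_def by (rule card_of_image)
    moreover have "|K| \<le>o |DA \<times> (UNIV::nat set)|" unfolding K_def by (rule card_of_mono1) auto
    ultimately show ?thesis using ordLeq_transitive by blast
  qed
  ultimately show ?thesis by blast
qed

lemma finite_dense:
  assumes "dense_wrt d S D" "finite D"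
    and pos: "\<And>x y. x \<in> S \<Longrightarrow> y \<in> S \<Longrightarrow> x \<noteq> y \<Longrightarrow> d x y > 0"
  shows "S \<subseteq> D"
proof
  fix x assume x: "x \<in> S"
  show "x \<in> D"
  proof (rule ccontr)
    assume nx: "x \<notin> D"
    have DS: "D \<subseteq> S" using assms(1) unfolding dense_wrt_def by auto
    show False
    proof (cases "D = {}")
      case True
      have "\<exists>y\<in>D. d x y < 1" using assms(1) x unfolding dense_wrt_def by simp
      thus False using True by simp
    next
      case False
      define m where "m = Min ((\<lambda>y. d x y) ` D)"
      have fin: "finite ((\<lambda>y. d x y) ` D)" using assms(2) by blast
      have ne: "(\<lambda>y. d x y) ` D \<noteq> {}" using False by blast
      have "m \<in> (\<lambda>y. d x y) ` D" unfolding m_def using Min_in[OF fin ne] .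
      then obtain y0 where y0: "y0 \<in> D" "m = d x y0" by blast
      have "x \<noteq> y0" using nx y0 by blast
      moreover have "y0 \<in> S" using DS y0 by blast
      ultimately have "m > 0" using pos[OF x] y0(2) by simp
      moreover have "\<forall>e>0. \<exists>y\<in>D. d x y < e" using assms(1) x unfolding dense_wrt_def by simp
      ultimately obtain y where "y \<in> D" "d x y < m" by blast
      moreover have "m \<le> d x y" unfolding m_def using \<open>y \<in> D\<close> fin by (simp add: Min_le)
      ultimately show False by simp
    qed
  qed
qed


lemma nat_times_le:
  assumes "\<not> finite A" shows "|A \<times> (UNIV::nat set)| \<le>o |A|"
  using card_of_Times_infinite[OF assms, of "UNIV::nat set"] infinite_iff_card_of_nat assms
  ordIso_iff_ordLeq by blast


definition cond_fbl :: "nat \<Rightarrow> (nat \<Rightarrow> ('a::real_normed_vector \<Rightarrow>\<^sub>L real)) \<Rightarrow> bool" where "cond_fbl n xs \<longleftrightarrow> (\<forall>x::'a. norm x \<le> 1 \<longrightarrow> (\<Sum>k<n. \<bar>blinfun_apply (xs k) x\<bar>) \<le> 1)"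

lemma fbl_sums_alt: "fbl_sums f = {(\<Sum>k<n. \<bar>f (xs k)\<bar>) | n xs. cond_fbl n xs}"
  unfolding fbl_sums_def cond_fbl_def by simp

lemma fbl_sums_ne: "fbl_sums f \<noteq> {}"
proof -
  have "cond_fbl 0 xs" for xs unfolding cond_fbl_def by simp
  thus ?thesis unfolding fbl_sums_alt by blast
qed

lemma fbl_le:
  fixes h :: "('a::real_normed_vector \<Rightarrow>\<^sub>L real) \<Rightarrow> real"
  assumes "\<And>n xs. cond_fbl n xs \<Longrightarrow> (\<Sum>k<n. \<bar>h (xs k)\<bar>) \<le> B"
  shows "bdd_above (fbl_sums h) \<and> fbl_norm h \<le> B"
proof -
  have "\<forall>s\<in>fbl_sums h. s \<le> B" using assms unfolding fbl_sums_alt by blast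
  thus ?thesis unfolding fbl_norm_def using fbl_sums_ne
    by (meson bdd_above.unfold cSup_least)
qed

lemma fbl_ge:
  fixes h :: "('a::real_normed_vector \<Rightarrow>\<^sub>L real) \<Rightarrow> real"
  assumes "bdd_above (fbl_sums h)" "cond_fbl n xs"
  shows "(\<Sum>k<n. \<bar>h (xs k)\<bar>) \<le> fbl_norm h"
proof -
  have "(\<Sum>k<n. \<bar>h (xs k)\<bar>) \<in> fbl_sums h" using assms(2) unfolding fbl_sums_alt by blast
  thus ?thesis unfolding fbl_norm_def using assms(1) by (rule cSup_upper)
qed

lemma fbl_norm_nonneg: "bdd_above (fbl_sums h) \<Longrightarrow> 0 \<le> fbl_norm h"
  using fbl_ge[of h 0] unfolding cond_fbl_def by simp

lemma fbl_mono:
  fixes h g :: "('a::real_normed_vector \<Rightarrow>\<^sub>L real) \<Rightarrow> real"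
  assumes "bdd_above (fbl_sums g)" "\<And>x. \<bar>h x\<bar> \<le> \<bar>g x\<bar>"
  shows "bdd_above (fbl_sums h) \<and> fbl_norm h \<le> fbl_norm g"
proof (rule fbl_le)
  fix n and xs :: "nat \<Rightarrow> 'a \<Rightarrow>\<^sub>L real" assume c: "cond_fbl n xs"
  have "(\<Sum>k<n. \<bar>h (xs k)\<bar>) \<le> (\<Sum>k<n. \<bar>g (xs k)\<bar>)" using assms(2) by (simp add: sum_mono)
  also have "\<dots> \<le> fbl_norm g" using fbl_ge[OF assms(1) c] .
  finally show "(\<Sum>k<n. \<bar>h (xs k)\<bar>) \<le> fbl_norm g" .
qed

lemma fbl_add:
  fixes f g :: "('a::real_normed_vector \<Rightarrow>\<^sub>L real) \<Rightarrow> real"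
  assumes "bdd_above (fbl_sums f)" "bdd_above (fbl_sums g)"
  shows "bdd_above (fbl_sums (\<lambda>x. f x + g x)) \<and> fbl_norm (\<lambda>x. f x + g x) \<le> fbl_norm f + fbl_norm g"
proof (rule fbl_le)
  fix n and xs :: "nat \<Rightarrow> 'a \<Rightarrow>\<^sub>L real" assume c: "cond_fbl n xs"
  have "(\<Sum>k<n. \<bar>f (xs k) + g (xs k)\<bar>) \<le> (\<Sum>k<n. \<bar>f (xs k)\<bar> + \<bar>g (xs k)\<bar>)"
    by (rule sum_mono) (rule abs_triangle_ineq)
  also have "\<dots> = (\<Sum>k<n. \<bar>f (xs k)\<bar>) + (\<Sum>k<n. \<bar>g (xs k)\<bar>)" by (rule sum.distrib)
  also have "\<dots> \<le> fbl_norm f + fbl_norm g" using fbl_ge[OF assms(1) c] fbl_ge[OF assms(2) c] by linarith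
  finally show "(\<Sum>k<n. \<bar>f (xs k) + g (xs k)\<bar>) \<le> fbl_norm f + fbl_norm g" .
qed

lemma fbl_scal:
  fixes f :: "('a::real_normed_vector \<Rightarrow>\<^sub>L real) \<Rightarrow> real"
  assumes "bdd_above (fbl_sums f)"
  shows "bdd_above (fbl_sums (\<lambda>x. c * f x)) \<and> fbl_norm (\<lambda>x. c * f x) \<le> \<bar>c\<bar> * fbl_norm f"
proof (rule fbl_le)
  fix n and xs :: "nat \<Rightarrow> 'a \<Rightarrow>\<^sub>L real" assume cn: "cond_fbl n xs"
  have "(\<Sum>k<n. \<bar>c * f (xs k)\<bar>) = \<bar>c\<bar> * (\<Sum>k<n. \<bar>f (xs k)\<bar>)" by (simp add: abs_mult sum_distrib_left)
  also have "\<dots> \<le> \<bar>c\<bar> * fbl_norm f" using fbl_ge[OF assms cn] by (simp add: mult_left_mono)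
  finally show "(\<Sum>k<n. \<bar>c * f (xs k)\<bar>) \<le> \<bar>c\<bar> * fbl_norm f" .
qed

lemma fbl_sums_abs_cong: "(\<And>x. \<bar>f x\<bar> = \<bar>g x\<bar>) \<Longrightarrow> fbl_sums f = fbl_sums g"
  unfolding fbl_sums_def by simp

lemma fbl_dist_sym: "fbl_dist f g = fbl_dist g f"
  unfolding fbl_dist_def fbl_norm_def by (rule arg_cong[where f=Sup], rule fbl_sums_abs_cong) simp

definition "BDD = {f. bdd_above (fbl_sums f)}"

lemma fbl_dist_tri:
  assumes "(\<lambda>x. f x - h x) \<in> BDD" "(\<lambda>x. h x - g x) \<in> BDD"
  shows "fbl_dist f g \<le> fbl_dist f h + fbl_dist h g"
proof -
  have "fbl_norm (\<lambda>x. (f x - h x) + (h x - g x)) \<le> fbl_norm (\<lambda>x. f x - h x) + fbl_norm (\<lambda>x. h x - g x)"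
    using fbl_add[of "\<lambda>x. f x - h x" "\<lambda>x. h x - g x"] assms unfolding BDD_def by simp
  thus ?thesis unfolding fbl_dist_def by simp
qed

lemma homog_zero: "pos_homogeneous h \<Longrightarrow> h 0 = 0"
proof -
  assume "pos_homogeneous h"
  hence "h ((2::real) *\<^sub>R 0) = 2 * h 0" unfolding pos_homogeneous_def by (metis zero_less_numeral)
  thus ?thesis by simp
qed

lemma point_bound:
  fixes h :: "('a::real_normed_vector \<Rightarrow>\<^sub>L real) \<Rightarrow> real"
  assumes "pos_homogeneous h" "bdd_above (fbl_sums h)"
  shows "\<bar>h xs\<bar> \<le> fbl_norm h * norm xs"
proof (cases "xs = 0")
  case True thus ?thesis using homog_zero[OF assms(1)] by simp
next
  case False
  let ?y = "(1 / norm xs) *\<^sub>R xs"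
  have np: "norm xs > 0" using False by simp
  have c: "cond_fbl (Suc 0) (\<lambda>k. ?y)" unfolding cond_fbl_def
  proof (intro allI impI)
    fix x :: 'a assume x: "norm x \<le> 1"
    have "\<bar>blinfun_apply ?y x\<bar> = \<bar>blinfun_apply xs x\<bar> / norm xs" by (simp add: blinfun.scaleR_left)
    also have "\<dots> \<le> norm xs * norm x / norm xs"
      using norm_blinfun[of xs x] np by (intro divide_right_mono) auto
    also have "\<dots> \<le> 1" using x np by simp
    finally show "(\<Sum>k<Suc 0. \<bar>blinfun_apply ?y x\<bar>) \<le> 1" by simp
  qed
  have "h ?y = (1 / norm xs) * h xs" using assms(1) np unfolding pos_homogeneous_def by simp
  hence "\<bar>h xs\<bar> / norm xs \<le> fbl_norm h" using fbl_ge[OF assms(2) c] np by (simp add: abs_mult)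
  thus ?thesis using np by (simp add: divide_le_eq mult.commute)
qed

lemma delta_homog: "pos_homogeneous (delta x)"
  unfolding pos_homogeneous_def delta_def by (simp add: blinfun.scaleR_left)

lemma delta_bound:
  fixes x :: "'a::real_normed_vector"
  shows "bdd_above (fbl_sums (delta x)) \<and> fbl_norm (delta x) \<le> norm x"
proof (rule fbl_le)
  fix n and xs :: "nat \<Rightarrow> 'a \<Rightarrow>\<^sub>L real" assume c: "cond_fbl n (xs :: nat \<Rightarrow> 'a \<Rightarrow>\<^sub>L real)"
  show "(\<Sum>k<n. \<bar>delta x (xs k)\<bar>) \<le> norm x"
  proof (cases "x = 0")
    case True thus ?thesis by (simp add: delta_def)
  next
    case False
    let ?u = "(1 / norm x) *\<^sub>R x"
    have nu: "norm ?u \<le> 1" using False by simp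
    have "(\<Sum>k<n. \<bar>delta x (xs k)\<bar>) = norm x * (\<Sum>k<n. \<bar>blinfun_apply (xs k) ?u\<bar>)"
      using False by (simp add: delta_def blinfun.scaleR_right abs_mult sum_distrib_left)
    also have "\<dots> \<le> norm x * 1" using c nu unfolding cond_fbl_def by (intro mult_left_mono) auto
    finally show ?thesis by simp
  qed
qed

lemma delta_H0: "delta x \<in> H0"
  unfolding H0_def using delta_homog[of x] delta_bound[of x] by simp

lemma delta_diff: "(\<lambda>y. delta x y - delta z y) = delta (x - z)"
  unfolding delta_def by (simp add: blinfun.diff_right)

lemma H0_add: "f \<in> H0 \<Longrightarrow> g \<in> H0 \<Longrightarrow> (\<lambda>x. f x + g x) \<in> H0"
  unfolding H0_def pos_homogeneous_def using fbl_add[of f g] by (auto simp: algebra_simps)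

lemma H0_scal: "f \<in> H0 \<Longrightarrow> (\<lambda>x. c * f x) \<in> H0"
  unfolding H0_def pos_homogeneous_def using fbl_scal[of f c] by (auto simp: algebra_simps)

lemma H0_diff: "f \<in> H0 \<Longrightarrow> g \<in> H0 \<Longrightarrow> (\<lambda>x. f x - g x) \<in> H0"
  using H0_add[of f "\<lambda>x. (-1) * g x"] H0_scal[of g "-1"] by simp

lemma H0_max: "f \<in> H0 \<Longrightarrow> g \<in> H0 \<Longrightarrow> (\<lambda>x. max (f x) (g x)) \<in> H0"
proof -
  assume f: "f \<in> H0" and g: "g \<in> H0"
  have b: "bdd_above (fbl_sums (\<lambda>x. \<bar>f x\<bar> + \<bar>g x\<bar>))"
    using fbl_add[of "\<lambda>x. \<bar>f x\<bar>" "\<lambda>x. \<bar>g x\<bar>"] f g unfolding H0_def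
    using fbl_sums_abs_cong[of "\<lambda>x. \<bar>f x\<bar>" f] fbl_sums_abs_cong[of "\<lambda>x. \<bar>g x\<bar>" g] by simp
  have "bdd_above (fbl_sums (\<lambda>x. max (f x) (g x))) \<and> fbl_norm (\<lambda>x. max (f x) (g x)) \<le> fbl_norm (\<lambda>x. \<bar>f x\<bar> + \<bar>g x\<bar>)"
    by (rule fbl_mono[OF b]) auto
  hence "bdd_above (fbl_sums (\<lambda>x. max (f x) (g x)))" 
  by (rule conjunct1)
  moreover have "pos_homogeneous (\<lambda>x. max (f x) (g x))"
    unfolding pos_homogeneous_def
  proof (intro allI impI)
    fix t :: real and x assume t: "t > 0"
    have "f (t *\<^sub>R x) = t * f x" "g (t *\<^sub>R x) = t * g x"
      using f g t unfolding H0_def pos_homogeneous_def by auto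
    moreover have "max (t * f x) (t * g x) = t * max (f x) (g x)"
      using t by (auto simp: max_def mult_le_cancel_left_pos)
    ultimately show "max (f (t *\<^sub>R x)) (g (t *\<^sub>R x)) = t * max (f x) (g x)" by simp
  qed
  ultimately show ?thesis unfolding H0_def by blast
qed

lemma H0_min: "f \<in> H0 \<Longrightarrow> g \<in> H0 \<Longrightarrow> (\<lambda>x. min (f x) (g x)) \<in> H0"
proof -
  assume f: "f \<in> H0" and g: "g \<in> H0"
  have "(\<lambda>x. - max (- f x) (- g x)) \<in> H0"
    using H0_scal[of _ "-1"] H0_max[OF H0_scal[OF f, of "-1"] H0_scal[OF g, of "-1"]] by simp
  moreover have "(\<lambda>x. - max (- f x) (- g x)) = (\<lambda>x. min (f x) (g x))" by (auto simp: max_def min_def)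
  ultimately show ?thesis by simp
qed

lemma H0_BDD: "H0 \<subseteq> BDD" unfolding H0_def BDD_def by auto

lemma fbl_dist_tri_H0:
  "f \<in> H0 \<Longrightarrow> g \<in> H0 \<Longrightarrow> h \<in> H0 \<Longrightarrow> fbl_dist f g \<le> fbl_dist f h + fbl_dist h g"
  using fbl_dist_tri[of f h g] H0_diff[of f h] H0_diff[of h g] H0_BDD by (meson subsetD)

lemma fbl_dist_nonneg: "f \<in> H0 \<Longrightarrow> g \<in> H0 \<Longrightarrow> 0 \<le> fbl_dist f g"
  unfolding fbl_dist_def using fbl_norm_nonneg[of "\<lambda>x. f x - g x"] H0_diff[of f g] H0_BDD unfolding BDD_def by auto

lemma fbl_dist_self: 
  fixes f :: "('a::real_normed_vector \<Rightarrow>\<^sub>L real) \<Rightarrow> real"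
  shows "fbl_dist f f = 0"
proof -
  have "bdd_above (fbl_sums (\<lambda>x::'a \<Rightarrow>\<^sub>L real. 0::real)) \<and> fbl_norm (\<lambda>x::'a \<Rightarrow>\<^sub>L real. 0::real) \<le> 0" by (rule fbl_le) simp
  moreover have "0 \<le> fbl_norm (\<lambda>x::'a \<Rightarrow>\<^sub>L real. 0::real)" using calculation fbl_norm_nonneg by blast
  ultimately show ?thesis unfolding fbl_dist_def by simp
qed

lemma fbl_dist_point:
  assumes "f \<in> H0" "g \<in> H0"
  shows "\<bar>f xs - g xs\<bar> \<le> fbl_dist f g * norm xs"
proof -
  have "(\<lambda>x. f x - g x) \<in> H0" using H0_diff[OF assms] .
  hence "pos_homogeneous (\<lambda>x. f x - g x)" "bdd_above (fbl_sums (\<lambda>x. f x - g x))" unfolding H0_def by auto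
  from point_bound[OF this, of xs] show ?thesis unfolding fbl_dist_def by simp
qed

lemma fbl_dist_pos:
  assumes "f \<in> H0" "g \<in> H0" "f \<noteq> g"
  shows "fbl_dist f g > 0"
proof -
  obtain xs where "f xs \<noteq> g xs" using assms(3) by blast
  hence "0 < \<bar>f xs - g xs\<bar>" by simp
  hence "0 < fbl_dist f g * norm xs" using fbl_dist_point[OF assms(1,2), of xs] by linarith
  moreover have "0 \<le> norm xs" by simp
  ultimately show ?thesis using fbl_dist_nonneg[OF assms(1,2)] by (simp add: zero_less_mult_iff)
qed


section \<open>FBL basics\<close>

lemma csg_H0: "closed_sublattice_gen (H0 :: (('a::real_normed_vector \<Rightarrow>\<^sub>L real) \<Rightarrow> real) set)"
  unfolding closed_sublattice_gen_def by (simp add: delta_H0 H0_add H0_scal H0_max H0_min)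

lemma FBL_sub: "closed_sublattice_gen S \<Longrightarrow> FBL \<subseteq> S"
  unfolding FBL_def by blast

lemma FBL_H0: "FBL \<subseteq> H0"
  using FBL_sub[OF csg_H0] .

lemma FBL_iff: "f \<in> FBL \<longleftrightarrow> (\<forall>S. closed_sublattice_gen S \<longrightarrow> f \<in> S)"
  unfolding FBL_def by blast

lemma csg_D:
  assumes "closed_sublattice_gen S"
  shows "delta x \<in> S" "f \<in> S \<Longrightarrow> g \<in> S \<Longrightarrow> (\<lambda>y. f y + g y) \<in> S"
    "f \<in> S \<Longrightarrow> (\<lambda>y. c * f y) \<in> S"
    "f \<in> S \<Longrightarrow> g \<in> S \<Longrightarrow> (\<lambda>y. max (f y) (g y)) \<in> S"
    "f \<in> S \<Longrightarrow> g \<in> S \<Longrightarrow> (\<lambda>y. min (f y) (g y)) \<in> S"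
  using assms unfolding closed_sublattice_gen_def by auto

lemma FBL_delta: "delta x \<in> FBL"
  unfolding FBL_iff by (metis csg_D(1))

lemma FBL_add: "f \<in> FBL \<Longrightarrow> g \<in> FBL \<Longrightarrow> (\<lambda>y. f y + g y) \<in> FBL"
  unfolding FBL_iff by (metis csg_D(2))

lemma FBL_scal: "f \<in> FBL \<Longrightarrow> (\<lambda>y. c * f y) \<in> FBL"
  unfolding FBL_iff by (metis csg_D(3))

lemma FBL_max: "f \<in> FBL \<Longrightarrow> g \<in> FBL \<Longrightarrow> (\<lambda>y. max (f y) (g y)) \<in> FBL"
  unfolding FBL_iff by (metis csg_D(4))

lemma FBL_min: "f \<in> FBL \<Longrightarrow> g \<in> FBL \<Longrightarrow> (\<lambda>y. min (f y) (g y)) \<in> FBL"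
  unfolding FBL_iff by (metis csg_D(5))

section \<open>Distance estimates\<close>

lemma dist_add_est:
  assumes "f \<in> H0" "g \<in> H0" "p \<in> H0" "q \<in> H0"
  shows "fbl_dist (\<lambda>y. f y + g y) (\<lambda>y. p y + q y) \<le> fbl_dist f p + fbl_dist g q"
proof -
  have b1: "bdd_above (fbl_sums (\<lambda>y. f y - p y))" using H0_diff[OF assms(1,3)] unfolding H0_def by simp
  have b2: "bdd_above (fbl_sums (\<lambda>y. g y - q y))" using H0_diff[OF assms(2,4)] unfolding H0_def by simp
  have "fbl_norm (\<lambda>y. (f y - p y) + (g y - q y)) \<le> fbl_norm (\<lambda>y. f y - p y) + fbl_norm (\<lambda>y. g y - q y)"
    using fbl_add[OF b1 b2] by simp
  moreover have "(\<lambda>y. (f y - p y) + (g y - q y)) = (\<lambda>y. (f y + g y) - (p y + q y))" by (simp add: algebra_simps)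
  ultimately show ?thesis unfolding fbl_dist_def by simp
qed

lemma dist_lat_est:
  assumes "f \<in> H0" "g \<in> H0" "p \<in> H0" "q \<in> H0"
    and pw: "\<And>y. \<bar>F y - P y\<bar> \<le> \<bar>f y - p y\<bar> + \<bar>g y - q y\<bar>"
  shows "fbl_dist F P \<le> fbl_dist f p + fbl_dist g q"
proof -
  have b1: "bdd_above (fbl_sums (\<lambda>y. \<bar>f y - p y\<bar>))"
    using H0_diff[OF assms(1,3)] fbl_sums_abs_cong[of "\<lambda>y. \<bar>f y - p y\<bar>" "\<lambda>y. f y - p y"] unfolding H0_def by simp
  have b2: "bdd_above (fbl_sums (\<lambda>y. \<bar>g y - q y\<bar>))"
    using H0_diff[OF assms(2,4)] fbl_sums_abs_cong[of "\<lambda>y. \<bar>g y - q y\<bar>" "\<lambda>y. g y - q y"] unfolding H0_def by simp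
  have s: "bdd_above (fbl_sums (\<lambda>y. \<bar>f y - p y\<bar> + \<bar>g y - q y\<bar>)) \<and>
     fbl_norm (\<lambda>y. \<bar>f y - p y\<bar> + \<bar>g y - q y\<bar>) \<le> fbl_norm (\<lambda>y. \<bar>f y - p y\<bar>) + fbl_norm (\<lambda>y. \<bar>g y - q y\<bar>)"
    by (rule fbl_add[OF b1 b2])
  have m: "bdd_above (fbl_sums (\<lambda>y. F y - P y)) \<and> fbl_norm (\<lambda>y. F y - P y) \<le> fbl_norm (\<lambda>y. \<bar>f y - p y\<bar> + \<bar>g y - q y\<bar>)"
    by (rule fbl_mono) (use s pw in auto)
  have e1: "fbl_norm (\<lambda>y. \<bar>f y - p y\<bar>) = fbl_norm (\<lambda>y. f y - p y)"
    unfolding fbl_norm_def by (subst fbl_sums_abs_cong[of _ "\<lambda>y. f y - p y"]) auto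
  have e2: "fbl_norm (\<lambda>y. \<bar>g y - q y\<bar>) = fbl_norm (\<lambda>y. g y - q y)"
    unfolding fbl_norm_def by (subst fbl_sums_abs_cong[of _ "\<lambda>y. g y - q y"]) auto
  show ?thesis using m s e1 e2 unfolding fbl_dist_def by linarith
qed

lemma dist_scal_est:
  assumes "f \<in> H0" "q \<in> H0"
  shows "fbl_dist (\<lambda>y. c * f y) (\<lambda>y. r * q y) \<le> \<bar>c\<bar> * fbl_dist f q + \<bar>c - r\<bar> * fbl_norm q"
proof -
  have b1: "bdd_above (fbl_sums (\<lambda>y. c * (f y - q y)))"
    using fbl_scal[of "\<lambda>y. f y - q y" c] H0_diff[OF assms] unfolding H0_def by simp
  have b2: "bdd_above (fbl_sums (\<lambda>y. (c - r) * q y))"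
    using fbl_scal[of q "c - r"] assms(2) unfolding H0_def by simp
  have "fbl_norm (\<lambda>y. c * (f y - q y) + (c - r) * q y) \<le> fbl_norm (\<lambda>y. c * (f y - q y)) + fbl_norm (\<lambda>y. (c - r) * q y)"
    using fbl_add[OF b1 b2] by simp
  also have "\<dots> \<le> \<bar>c\<bar> * fbl_norm (\<lambda>y. f y - q y) + \<bar>c - r\<bar> * fbl_norm q"
    using fbl_scal[of "\<lambda>y. f y - q y" c] fbl_scal[of q "c - r"] H0_diff[OF assms] assms(2) unfolding H0_def
    by (simp add: add_mono)
  finally show ?thesis unfolding fbl_dist_def by (simp add: algebra_simps)
qed

lemma fbl_norm_dist: "f \<in> H0 \<Longrightarrow> fbl_norm f = fbl_dist f (\<lambda>y. 0)"
  unfolding fbl_dist_def by simp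

lemma zero_H0: "(\<lambda>y. 0) \<in> H0"
  using H0_scal[OF delta_H0[of 0], of 0] by simp


primrec fbl_lev :: "'a::real_normed_vector set \<Rightarrow> nat \<Rightarrow> (('a \<Rightarrow>\<^sub>L real) \<Rightarrow> real) set" where
  "fbl_lev D 0 = delta ` D"
| "fbl_lev D (Suc n) = fbl_lev D n \<union> (\<lambda>(a,b). \<lambda>y. a y + b y) ` (fbl_lev D n \<times> fbl_lev D n)
     \<union> (\<lambda>(r,a). \<lambda>y. of_rat r * a y) ` (UNIV \<times> fbl_lev D n)
     \<union> (\<lambda>(a,b). \<lambda>y. max (a y) (b y)) ` (fbl_lev D n \<times> fbl_lev D n)
     \<union> (\<lambda>(a,b). \<lambda>y. min (a y) (b y)) ` (fbl_lev D n \<times> fbl_lev D n)"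

definition "fbl_GG D = (\<Union>n. fbl_lev D n)"

lemma lev_H0: "fbl_lev D n \<subseteq> H0"
proof (induction n)
  case 0 thus ?case using delta_H0 by auto
next
  case (Suc n)
  thus ?case by (auto intro!: H0_add H0_scal H0_max H0_min)
qed

lemma GG_H0: "fbl_GG D \<subseteq> H0" unfolding fbl_GG_def using lev_H0 by blast

lemma lev_mono: "m \<le> n \<Longrightarrow> fbl_lev D m \<subseteq> fbl_lev D n"
proof (induction n)
  case 0 thus ?case by simp
next
  case (Suc n) thus ?case by (cases "m = Suc n") auto
qed

lemma GG_two:
  assumes "a \<in> fbl_GG D" "b \<in> fbl_GG D"
  obtains n where "a \<in> fbl_lev D n" "b \<in> fbl_lev D n"
proof -
  obtain m k where "a \<in> fbl_lev D m" "b \<in> fbl_lev D k" using assms unfolding fbl_GG_def by blast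
  hence "a \<in> fbl_lev D (max m k)" "b \<in> fbl_lev D (max m k)" using lev_mono[of m "max m k" D] lev_mono[of k "max m k" D] by auto
  thus ?thesis using that by blast
qed

lemma GG_delta: "x \<in> D \<Longrightarrow> delta x \<in> fbl_GG D"
  unfolding fbl_GG_def using fbl_lev.simps(1) by blast

lemma GG_add: "a \<in> fbl_GG D \<Longrightarrow> b \<in> fbl_GG D \<Longrightarrow> (\<lambda>y. a y + b y) \<in> fbl_GG D"
proof -
  assume "a \<in> fbl_GG D" "b \<in> fbl_GG D"
  then obtain n where "a \<in> fbl_lev D n" "b \<in> fbl_lev D n" by (rule GG_two)
  hence "(\<lambda>y. a y + b y) \<in> fbl_lev D (Suc n)" by force
  thus ?thesis unfolding fbl_GG_def by blast
qed

lemma GG_scal: "a \<in> fbl_GG D \<Longrightarrow> (\<lambda>y. of_rat r * a y) \<in> fbl_GG D"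
proof -
  assume "a \<in> fbl_GG D"
  then obtain n where "a \<in> fbl_lev D n" unfolding fbl_GG_def by blast
  hence "(\<lambda>y. of_rat r * a y) \<in> fbl_lev D (Suc n)" by force
  thus ?thesis unfolding fbl_GG_def by blast
qed

lemma GG_max: "a \<in> fbl_GG D \<Longrightarrow> b \<in> fbl_GG D \<Longrightarrow> (\<lambda>y. max (a y) (b y)) \<in> fbl_GG D"
proof -
  assume "a \<in> fbl_GG D" "b \<in> fbl_GG D"
  then obtain n where "a \<in> fbl_lev D n" "b \<in> fbl_lev D n" by (rule GG_two)
  hence "(\<lambda>y. max (a y) (b y)) \<in> fbl_lev D (Suc n)" by force
  thus ?thesis unfolding fbl_GG_def by blast
qed

lemma GG_min: "a \<in> fbl_GG D \<Longrightarrow> b \<in> fbl_GG D \<Longrightarrow> (\<lambda>y. min (a y) (b y)) \<in> fbl_GG D"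
proof -
  assume "a \<in> fbl_GG D" "b \<in> fbl_GG D"
  then obtain n where "a \<in> fbl_lev D n" "b \<in> fbl_lev D n" by (rule GG_two)
  hence "(\<lambda>y. min (a y) (b y)) \<in> fbl_lev D (Suc n)" by force
  thus ?thesis unfolding fbl_GG_def by blast
qed

lemma un_le:
  assumes "\<not> finite D" "|A| \<le>o |D|" "|B| \<le>o |D|"
  shows "|A \<union> B| \<le>o |D|"
  using card_of_Un_ordLeq_infinite_Field[of "|D|" A B] assms
  by (simp add: Field_card_of card_of_card_order_on)

lemma times_le:
  assumes "\<not> finite D" "|A| \<le>o |D|" "|B| \<le>o |D|"
  shows "|A \<times> B| \<le>o |D|"
proof -
  have "|A \<times> B| \<le>o |D \<times> B|" using card_of_Times_mono1[OF assms(2)] .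
  also have "|D \<times> B| \<le>o |D \<times> D|" using card_of_Times_mono2[OF assms(3)] .
  also have "|D \<times> D| \<le>o |D|" using card_of_Times_same_infinite[OF assms(1)] ordIso_iff_ordLeq by blast
  finally show ?thesis .
qed

lemma rat_le: "\<not> finite D \<Longrightarrow> |UNIV :: rat set| \<le>o |D|"
proof -
  assume "\<not> finite D"
  hence "|UNIV :: nat set| \<le>o |D|" using infinite_iff_card_of_nat by blast
  moreover have "|UNIV :: rat set| \<le>o |UNIV :: nat set|"
    unfolding card_of_ordLeq[symmetric] by (intro exI[of _ "to_nat"]) (simp add: inj_on_def)
  ultimately show ?thesis using ordLeq_transitive by blast
qed

lemma lev_card: assumes inf: "\<not> finite D" shows "|fbl_lev D n| \<le>o |D|"
proof (induction n)
  case 0 thus ?case using card_of_image by simp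
next
  case (Suc n)
  have P: "|fbl_lev D n \<times> fbl_lev D n| \<le>o |D|" using times_le[OF inf Suc.IH Suc.IH] .
  have Q: "|(UNIV::rat set) \<times> fbl_lev D n| \<le>o |D|" using times_le[OF inf rat_le[OF inf] Suc.IH] .
  have i1: "|(\<lambda>(a,b). \<lambda>y. a y + b y) ` (fbl_lev D n \<times> fbl_lev D n)| \<le>o |D|"
    using card_of_image P ordLeq_transitive by blast
  have i2: "|(\<lambda>(r,a). \<lambda>y. of_rat r * a y) ` ((UNIV::rat set) \<times> fbl_lev D n)| \<le>o |D|"
    using card_of_image Q ordLeq_transitive by blast
  have i3: "|(\<lambda>(a,b). \<lambda>y. max (a y) (b y)) ` (fbl_lev D n \<times> fbl_lev D n)| \<le>o |D|"
    using card_of_image P ordLeq_transitive by blast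
  have i4: "|(\<lambda>(a,b). \<lambda>y. min (a y) (b y)) ` (fbl_lev D n \<times> fbl_lev D n)| \<le>o |D|"
    using card_of_image P ordLeq_transitive by blast
  show ?case unfolding fbl_lev.simps
    by (intro un_le[OF inf] Suc.IH i1 i2 i3 i4)
qed

lemma GG_card: "\<not> finite D \<Longrightarrow> |fbl_GG D| \<le>o |D|"
  unfolding fbl_GG_def
  by (rule card_of_UNION_ordLeq_infinite) (auto simp: lev_card intro: ordLeq_transitive[OF _ infinite_iff_card_of_nat[THEN iffD1]] card_of_mono1)


lemma rat_approx: "(\<eta>::real) > 0 \<Longrightarrow> \<exists>r::rat. \<bar>(c::real) - of_rat r\<bar> < \<eta>"
proof -
  assume "\<eta> > 0"
  then obtain x where x: "x \<in> \<rat>" "c < x" "x < c + \<eta>" using Rats_dense_in_real[of c "c + \<eta>"] by auto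
  then obtain r where "x = of_rat r" by (auto elim: Rats_cases)
  thus ?thesis using x by (intro exI[of _ r]) auto
qed

lemma max_est: "\<bar>max (a::real) b - max c d\<bar> \<le> \<bar>a - c\<bar> + \<bar>b - d\<bar>"
  unfolding max_def abs_real_def by auto
lemma min_est: "\<bar>min (a::real) b - min c d\<bar> \<le> \<bar>a - c\<bar> + \<bar>b - d\<bar>"
  unfolding min_def abs_real_def by auto

definition "fbl_SS D = {h \<in> H0. \<forall>e>0. \<exists>q\<in>fbl_GG D. fbl_dist h q < e}"

lemma SS_H0: "h \<in> fbl_SS D \<Longrightarrow> h \<in> H0"
  unfolding fbl_SS_def by simp

lemma SS_ap: "h \<in> fbl_SS D \<Longrightarrow> e > 0 \<Longrightarrow> \<exists>q\<in>fbl_GG D. fbl_dist h q < e"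
  unfolding fbl_SS_def by simp

lemma SS_I: "h \<in> H0 \<Longrightarrow> (\<And>e. e > 0 \<Longrightarrow> \<exists>q\<in>fbl_GG D. fbl_dist h q < e) \<Longrightarrow> h \<in> fbl_SS D"
  unfolding fbl_SS_def by simp

lemma SS_csg:
  fixes D :: "'a::real_normed_vector set"
  assumes dense: "dense_wrt dist UNIV D"
  shows "closed_sublattice_gen (fbl_SS D)"
  unfolding closed_sublattice_gen_def
proof (intro conjI ballI allI impI)
  show "fbl_SS D \<subseteq> H0" using SS_H0 by blast
next
  fix x :: 'a
  have "\<exists>q\<in>fbl_GG D. fbl_dist (delta x) q < e" if e: "e > 0" for e
  proof -
    obtain d where d: "d \<in> D" "dist x d < e" using dense e unfolding dense_wrt_def by blast
    have "fbl_dist (delta x) (delta d) = fbl_norm (delta (x - d))" unfolding fbl_dist_def delta_diff ..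
    also have "\<dots> \<le> norm (x - d)" using delta_bound[of "x - d"] by simp
    also have "\<dots> < e" using d(2) by (simp add: dist_norm)
    finally show ?thesis using GG_delta[OF d(1)] by blast
  qed
  thus "delta x \<in> fbl_SS D" using delta_H0[of x] by (intro SS_I) auto
next
  fix f g assume f: "f \<in> fbl_SS D" and g: "g \<in> fbl_SS D"
  have fH: "f \<in> H0" and gH: "g \<in> H0" using f g SS_H0 by blast+
  {
    fix e :: real assume e: "e > 0"
    obtain p where p: "p \<in> fbl_GG D" "fbl_dist f p < e/2" using SS_ap[OF f, of "e/2"] e by auto
    obtain q where q: "q \<in> fbl_GG D" "fbl_dist g q < e/2" using SS_ap[OF g, of "e/2"] e by auto
    have pH: "p \<in> H0" and qH: "q \<in> H0" using p q GG_H0 by auto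
    have "fbl_dist (\<lambda>y. f y + g y) (\<lambda>y. p y + q y) < e"
      using dist_add_est[OF fH gH pH qH] p q by linarith
    moreover have "fbl_dist (\<lambda>y. max (f y) (g y)) (\<lambda>y. max (p y) (q y)) < e"
      using dist_lat_est[OF fH gH pH qH, of "\<lambda>y. max (f y) (g y)" "\<lambda>y. max (p y) (q y)"] p q
      using max_est by fastforce
    moreover have "fbl_dist (\<lambda>y. min (f y) (g y)) (\<lambda>y. min (p y) (q y)) < e"
      using dist_lat_est[OF fH gH pH qH, of "\<lambda>y. min (f y) (g y)" "\<lambda>y. min (p y) (q y)"] p q
      using min_est by fastforce
    ultimately have "\<exists>r\<in>fbl_GG D. fbl_dist (\<lambda>y. f y + g y) r < e"
        "\<exists>r\<in>fbl_GG D. fbl_dist (\<lambda>y. max (f y) (g y)) r < e"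
        "\<exists>r\<in>fbl_GG D. fbl_dist (\<lambda>y. min (f y) (g y)) r < e"
      using GG_add[OF p(1) q(1)] GG_max[OF p(1) q(1)] GG_min[OF p(1) q(1)] by blast+
  } note * = this
  show "(\<lambda>y. f y + g y) \<in> fbl_SS D" using * H0_add[OF fH gH] by (intro SS_I) auto
  show "(\<lambda>y. max (f y) (g y)) \<in> fbl_SS D"
    using * H0_max[OF fH gH] by (auto intro!: SS_I)
  show "(\<lambda>y. min (f y) (g y)) \<in> fbl_SS D"
    using * H0_min[OF fH gH] by (auto intro!: SS_I)
next
  fix f and c :: real assume f: "f \<in> fbl_SS D"
  have fH: "f \<in> H0" using f SS_H0 by blast
  have "\<exists>r\<in>fbl_GG D. fbl_dist (\<lambda>y. c * f y) r < e" if e: "e > 0" for e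
  proof -
    have "e / (2 * (\<bar>c\<bar> + 1)) > 0" using e by simp
    then obtain q where q: "q \<in> fbl_GG D" "fbl_dist f q < e / (2 * (\<bar>c\<bar> + 1))" using SS_ap[OF f] by blast
    have qH: "q \<in> H0" using q GG_H0 by auto
    have nq: "0 \<le> fbl_norm q" using qH fbl_norm_nonneg unfolding H0_def by blast
    have "e / (2 * (fbl_norm q + 1)) > 0" using e nq by simp
    then obtain r where r: "\<bar>c - of_rat r\<bar> < e / (2 * (fbl_norm q + 1))" using rat_approx by blast
    have A1: "fbl_dist (\<lambda>y. c * f y) (\<lambda>y. of_rat r * q y) \<le> \<bar>c\<bar> * fbl_dist f q + \<bar>c - of_rat r\<bar> * fbl_norm q"
      by (rule dist_scal_est[OF fH qH])
    have A2: "\<bar>c\<bar> * fbl_dist f q \<le> \<bar>c\<bar> * (e / (2 * (\<bar>c\<bar> + 1)))"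
      using q(2) by (intro mult_left_mono) auto
    have A3: "\<bar>c\<bar> * (e / (2 * (\<bar>c\<bar> + 1))) = (e/2) * (\<bar>c\<bar> / (\<bar>c\<bar> + 1))" by simp
    have A4: "\<bar>c\<bar> / (\<bar>c\<bar> + 1) \<le> 1" by simp
    have A5: "(e/2) * (\<bar>c\<bar> / (\<bar>c\<bar> + 1)) \<le> e/2" using mult_left_mono[OF A4, of "e/2"] e by simp
    have B2: "\<bar>c - of_rat r\<bar> * fbl_norm q \<le> e / (2 * (fbl_norm q + 1)) * fbl_norm q"
      using r nq by (intro mult_right_mono) auto
    have B3: "e / (2 * (fbl_norm q + 1)) * fbl_norm q = (e/2) * (fbl_norm q / (fbl_norm q + 1))" by simp
    have B4: "fbl_norm q / (fbl_norm q + 1) < 1" using nq by simp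
    have B5: "(e/2) * (fbl_norm q / (fbl_norm q + 1)) < e/2" using mult_strict_left_mono[OF B4, of "e/2"] e by simp
    have "fbl_dist (\<lambda>y. c * f y) (\<lambda>y. of_rat r * q y) < e" using A1 A2 A3 A5 B2 B3 B5 by linarith
    thus ?thesis using GG_scal[OF q(1), of r] by blast
  qed
  thus "(\<lambda>y. c * f y) \<in> fbl_SS D" using H0_scal[OF fH] by (intro SS_I) auto
next
  fix s h assume A: "(\<forall>n. s n \<in> fbl_SS D) \<and> h \<in> H0 \<and> (\<lambda>n. fbl_dist (s n) h) \<longlonglongrightarrow> 0"
  have "\<exists>q\<in>fbl_GG D. fbl_dist h q < e" if e: "e > 0" for e
  proof -
    obtain N where N: "fbl_dist (s N) h < e/2"
      using A e order_tendstoD(2)[of "\<lambda>n. fbl_dist (s n) h" 0 sequentially "e/2"] eventually_sequentially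
      by (metis half_gt_zero order_refl)
    obtain q where q: "q \<in> fbl_GG D" "fbl_dist (s N) q < e/2" using A e SS_ap[of "s N" D "e/2"] by auto
    have sH: "s N \<in> H0" using A SS_H0 by blast
    have "fbl_dist h q \<le> fbl_dist h (s N) + fbl_dist (s N) q"
      using fbl_dist_tri_H0[of h q "s N"] A sH q GG_H0 by auto
    thus ?thesis using N q fbl_dist_sym[of h "s N"] by (intro bexI[OF _ q(1)]) linarith
  qed
  thus "h \<in> fbl_SS D" using A by (intro SS_I) auto
qed

theorem upper_bound:
  fixes D :: "'a::real_normed_vector set" and A :: "(('a \<Rightarrow>\<^sub>L real) \<Rightarrow> real) set"
  assumes dense: "dense_wrt dist UNIV D" and inf: "\<not> finite D" and AF: "A \<subseteq> FBL"
  shows "\<exists>D'. dense_wrt fbl_dist A D' \<and> |D'| \<le>o |D|"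
proof -
  have FS: "FBL \<subseteq> fbl_SS D" by (rule FBL_sub[OF SS_csg[OF dense]])
  have ap: "\<exists>q\<in>fbl_GG D. fbl_dist a q < e" if "a \<in> A" "e > 0" for a e
    using that AF FS SS_ap by blast
  have AH: "A \<subseteq> H0" using AF FBL_H0 by blast
  have tri: "fbl_dist x y \<le> fbl_dist x z + fbl_dist y z" if "x \<in> A" "y \<in> A" "z \<in> fbl_GG D" for x y z
    using fbl_dist_tri_H0[of x y z] fbl_dist_sym[of z y] that AH GG_H0 by auto
  obtain D' where D': "dense_wrt fbl_dist A D'" "|D'| \<le>o |fbl_GG D \<times> (UNIV::nat set)|"
    using hereditary[of A "fbl_GG D" fbl_dist, OF ap tri] by blast
  have "|fbl_GG D \<times> (UNIV::nat set)| \<le>o |D \<times> (UNIV::nat set)|" using card_of_Times_mono1[OF GG_card[OF inf]] .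
  also have "|D \<times> (UNIV::nat set)| \<le>o |D|" using nat_times_le[OF inf] .
  finally show ?thesis using D' ordLeq_transitive by blast
qed


definition contf :: "(('a::real_normed_vector \<Rightarrow>\<^sub>L real) \<Rightarrow> real) \<Rightarrow> bool" where
  "contf h \<longleftrightarrow> (\<forall>x. \<forall>e>0. \<exists>r>0. \<forall>y. dist y x < r \<longrightarrow> \<bar>h y - h x\<bar> < e)"

definition "fbl_CC = {h \<in> H0. contf h}"

lemma CC_H0: "h \<in> fbl_CC \<Longrightarrow> h \<in> H0" unfolding fbl_CC_def by simp
lemma CC_c: "h \<in> fbl_CC \<Longrightarrow> e > 0 \<Longrightarrow> \<exists>r>0. \<forall>y. dist y x < r \<longrightarrow> \<bar>h y - h x\<bar> < e"
  unfolding fbl_CC_def contf_def by simp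
lemma CC_I: "h \<in> H0 \<Longrightarrow> (\<And>x e. e > 0 \<Longrightarrow> \<exists>r>0. \<forall>y. dist y x < r \<longrightarrow> \<bar>h y - h x\<bar> < e) \<Longrightarrow> h \<in> fbl_CC"
  unfolding fbl_CC_def contf_def by simp

lemma CC_two:
  assumes f: "f \<in> fbl_CC" and g: "g \<in> fbl_CC" and e: "e > 0"
    and pw: "\<And>y. \<bar>F y - F x\<bar> \<le> \<bar>f y - f x\<bar> + \<bar>g y - g x\<bar>"
  shows "\<exists>r>0. \<forall>y. dist y x < r \<longrightarrow> \<bar>F y - F x\<bar> < e"
proof -
  obtain r1 where r1: "r1 > 0" "\<forall>y. dist y x < r1 \<longrightarrow> \<bar>f y - f x\<bar> < e/2" using CC_c[OF f, of "e/2" x] e by auto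
  obtain r2 where r2: "r2 > 0" "\<forall>y. dist y x < r2 \<longrightarrow> \<bar>g y - g x\<bar> < e/2" using CC_c[OF g, of "e/2" x] e by auto
  show ?thesis
  proof (intro exI[of _ "min r1 r2"] conjI allI impI)
    show "min r1 r2 > 0" using r1 r2 by simp
    fix y assume "dist y x < min r1 r2"
    thus "\<bar>F y - F x\<bar> < e" using r1 r2 pw[of y] by force
  qed
qed

lemma CC_csg: "closed_sublattice_gen (fbl_CC :: (('a::real_normed_vector \<Rightarrow>\<^sub>L real) \<Rightarrow> real) set)"
  unfolding closed_sublattice_gen_def
proof (intro conjI ballI allI impI)
  show "fbl_CC \<subseteq> H0" using CC_H0 by blast
next
  fix x :: 'a
  show "delta x \<in> fbl_CC"
  proof (rule CC_I[OF delta_H0])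
    fix xs :: "'a \<Rightarrow>\<^sub>L real" and e :: real assume e: "e > 0"
    show "\<exists>r>0. \<forall>y. dist y xs < r \<longrightarrow> \<bar>delta x y - delta x xs\<bar> < e"
    proof (intro exI[of _ "e / (norm x + 1)"] conjI allI impI)
      show "e / (norm x + 1) > 0" using e by (simp add: add_nonneg_pos)
      fix y assume y: "dist y xs < e / (norm x + 1)"
      have "\<bar>delta x y - delta x xs\<bar> = \<bar>blinfun_apply (y - xs) x\<bar>" unfolding delta_def by (simp add: blinfun.diff_left)
      also have "\<dots> \<le> norm (y - xs) * norm x" using norm_blinfun[of "y - xs" x] by simp
      also have "\<dots> \<le> norm (y - xs) * (norm x + 1)" by (simp add: mult_left_mono)
      also have "\<dots> < e / (norm x + 1) * (norm x + 1)"
        using y by (intro mult_strict_right_mono) (auto simp: dist_norm add_nonneg_pos)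
      also have "\<dots> = e" proof - have "norm x + 1 \<noteq> 0" using norm_ge_zero[of x] by linarith thus ?thesis by simp qed
      finally show "\<bar>delta x y - delta x xs\<bar> < e" .
    qed
  qed
next
  fix f g :: "('a \<Rightarrow>\<^sub>L real) \<Rightarrow> real" assume f: "f \<in> fbl_CC" and g: "g \<in> fbl_CC"
  show "(\<lambda>y. f y + g y) \<in> fbl_CC"
    by (rule CC_I[OF H0_add[OF CC_H0[OF f] CC_H0[OF g]]], rule CC_two[OF f g]) auto
  show "(\<lambda>y. max (f y) (g y)) \<in> fbl_CC"
    by (rule CC_I[OF H0_max[OF CC_H0[OF f] CC_H0[OF g]]], rule CC_two[OF f g]) (auto simp: max_est)
  show "(\<lambda>y. min (f y) (g y)) \<in> fbl_CC"
    by (rule CC_I[OF H0_min[OF CC_H0[OF f] CC_H0[OF g]]], rule CC_two[OF f g]) (auto simp: min_est)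
next
  fix f :: "('a \<Rightarrow>\<^sub>L real) \<Rightarrow> real" and c :: real assume f: "f \<in> fbl_CC"
  show "(\<lambda>y. c * f y) \<in> fbl_CC"
  proof (rule CC_I[OF H0_scal[OF CC_H0[OF f]]])
    fix x :: "'a \<Rightarrow>\<^sub>L real" and e :: real assume e: "e > 0"
    have "e / (\<bar>c\<bar> + 1) > 0" using e by (simp add: add_nonneg_pos)
    then obtain r where r: "r > 0" "\<forall>y. dist y x < r \<longrightarrow> \<bar>f y - f x\<bar> < e / (\<bar>c\<bar> + 1)" using CC_c[OF f] by blast
    show "\<exists>r>0. \<forall>y. dist y x < r \<longrightarrow> \<bar>c * f y - c * f x\<bar> < e"
    proof (intro exI[of _ r] conjI allI impI)
      fix y assume "dist y x < r"
      hence a: "\<bar>f y - f x\<bar> < e / (\<bar>c\<bar> + 1)" using r by blast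
      have "\<bar>c * f y - c * f x\<bar> = \<bar>c\<bar> * \<bar>f y - f x\<bar>" by (simp add: abs_mult[symmetric] algebra_simps)
      also have "\<dots> \<le> (\<bar>c\<bar> + 1) * \<bar>f y - f x\<bar>" by (simp add: mult_right_mono)
      also have "\<dots> < (\<bar>c\<bar> + 1) * (e / (\<bar>c\<bar> + 1))" using a by (intro mult_strict_left_mono) auto
      also have "\<dots> = e" by (simp add: field_simps add_nonneg_pos)
      finally show "\<bar>c * f y - c * f x\<bar> < e" .
    qed (use r in simp)
  qed
next
  fix s and h :: "('a \<Rightarrow>\<^sub>L real) \<Rightarrow> real"
  assume A: "(\<forall>n. s n \<in> fbl_CC) \<and> h \<in> H0 \<and> (\<lambda>n. fbl_dist (s n) h) \<longlonglongrightarrow> 0"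
  hence hH: "h \<in> H0" by blast
  show "h \<in> fbl_CC"
  proof (rule CC_I[OF hH])
    fix x :: "'a \<Rightarrow>\<^sub>L real" and e :: real assume e: "e > 0"
    define M where "M = norm x + 1"
    have M: "M > 0" unfolding M_def by (simp add: add_nonneg_pos)
    have "e / (3 * M) > 0" using e M by simp
    then obtain N where N: "fbl_dist (s N) h < e / (3 * M)"
    proof -
      have "eventually (\<lambda>n. fbl_dist (s n) h < e / (3*M)) sequentially"
        using A order_tendstoD(2)[of "\<lambda>n. fbl_dist (s n) h" 0 sequentially "e / (3*M)"] \<open>e / (3 * M) > 0\<close> by blast
      then obtain N where "\<forall>n\<ge>N. fbl_dist (s n) h < e / (3*M)" unfolding eventually_sequentially by blast
      thus ?thesis using that by blast
    qed
    have sC: "s N \<in> fbl_CC" using A by blast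
    have sH: "s N \<in> H0" using CC_H0[OF sC] .
    obtain r where r: "r > 0" "\<forall>y. dist y x < r \<longrightarrow> \<bar>s N y - s N x\<bar> < e/3" using CC_c[OF sC, of "e/3" x] e by auto
    have d0: "0 \<le> fbl_dist (s N) h" using fbl_dist_nonneg[OF sH hH] .
    show "\<exists>r>0. \<forall>y. dist y x < r \<longrightarrow> \<bar>h y - h x\<bar> < e"
    proof (intro exI[of _ "min r 1"] conjI allI impI)
      show "min r 1 > 0" using r by simp
      fix y assume y: "dist y x < min r 1"
      have ny: "norm y \<le> M" using y unfolding M_def dist_norm
        by (metis add.commute add_le_cancel_left diff_add_cancel min_less_iff_conj norm_triangle_ineq order.strict_implies_order order_trans)
      have b: "\<bar>s N z - h z\<bar> \<le> e / 3" if "norm z \<le> M" for z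
      proof -
        have "\<bar>s N z - h z\<bar> \<le> fbl_dist (s N) h * norm z" by (rule fbl_dist_point[OF sH hH])
        also have "\<dots> \<le> e / (3 * M) * M" using that N d0 by (intro mult_mono) auto
        also have "\<dots> = e / 3" using M by simp
        finally show ?thesis .
      qed
      have nx: "norm x \<le> M" unfolding M_def by simp
      have "\<bar>s N y - s N x\<bar> < e/3" using r y by simp
      thus "\<bar>h y - h x\<bar> < e" using b[OF ny] b[OF nx] by linarith
    qed
  qed
qed

lemma FBL_cont: "f \<in> FBL \<Longrightarrow> contf f"
  using FBL_sub[OF CC_csg] unfolding fbl_CC_def by blast


definition sublin :: "('a::real_vector \<Rightarrow> real) \<Rightarrow> bool" where
  "sublin q \<longleftrightarrow> (\<forall>x y. q (x + y) \<le> q x + q y) \<and> (\<forall>t\<ge>0. \<forall>x. q (t *\<^sub>R x) = t * q x)"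

lemma sublin_add: "sublin q \<Longrightarrow> q (x + y) \<le> q x + q y" unfolding sublin_def by blast
lemma sublin_hom: "sublin q \<Longrightarrow> t \<ge> 0 \<Longrightarrow> q (t *\<^sub>R x) = t * q x" unfolding sublin_def by blast
lemma sublin_0: "sublin q \<Longrightarrow> q 0 = 0" using sublin_hom[of q 0 0] by simp
lemma sublin_neg: "sublin q \<Longrightarrow> - q (- x) \<le> q x"
  using sublin_add[of q x "-x"] sublin_0[of q] by simp
lemma sublinI:
  assumes "\<And>x y. q (x + y) \<le> q x + q y" "\<And>t x. t \<ge> 0 \<Longrightarrow> q (t *\<^sub>R x) = t * q x"
  shows "sublin q" unfolding sublin_def using assms by blast

definition "hb_SetS q x y = {q (y + t *\<^sub>R x) - t * q x | t. t \<ge> (0::real)}"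
definition "hb_shift q x y = Inf (hb_SetS q x y)"

lemma SetS_ne: "hb_SetS q x y \<noteq> {}" unfolding hb_SetS_def by auto

lemma SetS_bdd: assumes "sublin q" shows "bdd_below (hb_SetS q x y)"
proof -
  have "- q (- y) \<le> s" if "s \<in> hb_SetS q x y" for s
  proof -
    from that obtain t where t: "t \<ge> 0" "s = q (y + t *\<^sub>R x) - t * q x" unfolding hb_SetS_def mem_Collect_eq by blast
    have "q (t *\<^sub>R x) \<le> q (y + t *\<^sub>R x) + q (- y)" using sublin_add[OF assms, of "y + t *\<^sub>R x" "-y"] by simp
    thus ?thesis using t sublin_hom[OF assms t(1)] by simp
  qed
  thus ?thesis unfolding bdd_below_def by blast
qed

lemma SetS_mem: "t \<ge> 0 \<Longrightarrow> q (y + t *\<^sub>R x) - t * q x \<in> hb_SetS q x y"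
  unfolding hb_SetS_def by blast

lemma shift_le: "sublin q \<Longrightarrow> t \<ge> 0 \<Longrightarrow> hb_shift q x y \<le> q (y + t *\<^sub>R x) - t * q x"
  unfolding hb_shift_def by (rule cInf_lower[OF SetS_mem SetS_bdd])

lemma shift_le_q: "sublin q \<Longrightarrow> hb_shift q x y \<le> q y"
  using shift_le[of q 0 x y] by simp

lemma shift_neg: "sublin q \<Longrightarrow> hb_shift q x (- x) \<le> - q x"
  using shift_le[of q 1 x "-x"] sublin_0[of q] by simp

lemma shift_ge: "(\<And>t. t \<ge> 0 \<Longrightarrow> c \<le> q (y + t *\<^sub>R x) - t * q x) \<Longrightarrow> c \<le> hb_shift q x y"
  unfolding hb_shift_def by (rule cInf_greatest) (auto simp: hb_SetS_def)

lemma shift_approx: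
  assumes "sublin q" "e > 0"
  obtains t where "t \<ge> 0" "q (y + t *\<^sub>R x) - t * q x < hb_shift q x y + e"
proof -
  have "Inf (hb_SetS q x y) < hb_shift q x y + e" using assms(2) unfolding hb_shift_def by simp
  then obtain s where "s \<in> hb_SetS q x y" "s < hb_shift q x y + e"
    using cInf_less_iff[OF SetS_ne SetS_bdd[OF assms(1)]] by blast
  thus ?thesis using that unfolding hb_SetS_def mem_Collect_eq by blast
qed

lemma shift_sublin:
  assumes q: "sublin q"
  shows "sublin (hb_shift q x)"
proof (rule sublinI)
  fix y1 y2
  show "hb_shift q x (y1 + y2) \<le> hb_shift q x y1 + hb_shift q x y2"
  proof (rule field_le_epsilon)
    fix e :: real assume e: "e > 0"
    obtain t1 where t1: "t1 \<ge> 0" "q (y1 + t1 *\<^sub>R x) - t1 * q x < hb_shift q x y1 + e/2"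
      using shift_approx[OF q, of "e/2"] e by auto
    obtain t2 where t2: "t2 \<ge> 0" "q (y2 + t2 *\<^sub>R x) - t2 * q x < hb_shift q x y2 + e/2"
      using shift_approx[OF q, of "e/2"] e by auto
    have "hb_shift q x (y1 + y2) \<le> q ((y1 + y2) + (t1 + t2) *\<^sub>R x) - (t1 + t2) * q x"
      using shift_le[OF q] t1 t2 by simp
    also have "(y1 + y2) + (t1 + t2) *\<^sub>R x = (y1 + t1 *\<^sub>R x) + (y2 + t2 *\<^sub>R x)" by (simp add: algebra_simps)
    also have "q \<dots> \<le> q (y1 + t1 *\<^sub>R x) + q (y2 + t2 *\<^sub>R x)" by (rule sublin_add[OF q])
    finally show "hb_shift q x (y1 + y2) \<le> hb_shift q x y1 + hb_shift q x y2 + e"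
      using t1 t2 by (simp add: algebra_simps)
  qed
next
  fix t :: real and y assume t: "t \<ge> 0"
  show "hb_shift q x (t *\<^sub>R y) = t * hb_shift q x y"
  proof (cases "t = 0")
    case True
    have "hb_shift q x 0 = 0"
    proof (rule antisym)
      show "hb_shift q x 0 \<le> 0" using shift_le[OF q, of 0 x 0] sublin_0[OF q] by simp
      show "0 \<le> hb_shift q x 0"
        by (rule shift_ge) (use sublin_hom[OF q] in simp)
    qed
    thus ?thesis using True by simp
  next
    case False
    hence tp: "t > 0" using t by simp
    have A: "hb_shift q x (t *\<^sub>R y) / t \<le> hb_shift q x y"
    proof (rule shift_ge)
      fix s :: real assume s: "s \<ge> 0"
      have "hb_shift q x (t *\<^sub>R y) \<le> q (t *\<^sub>R y + (t * s) *\<^sub>R x) - (t * s) * q x"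
        using shift_le[OF q] tp s by simp
      also have "t *\<^sub>R y + (t * s) *\<^sub>R x = t *\<^sub>R (y + s *\<^sub>R x)" by (simp add: algebra_simps)
      also have "q (t *\<^sub>R (y + s *\<^sub>R x)) - (t * s) * q x = t * (q (y + s *\<^sub>R x) - s * q x)"
        by (subst sublin_hom[OF q t]) (simp add: algebra_simps)
      finally show "hb_shift q x (t *\<^sub>R y) / t \<le> q (y + s *\<^sub>R x) - s * q x"
        using tp by (simp add: divide_le_eq mult.commute)
    qed
    have B: "t * hb_shift q x y \<le> hb_shift q x (t *\<^sub>R y)"
    proof (rule shift_ge)
      fix s :: real assume s: "s \<ge> 0"
      have "hb_shift q x y \<le> q (y + (s / t) *\<^sub>R x) - (s / t) * q x"
        using shift_le[OF q, of "s / t" x y] tp s by simp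
      hence "t * hb_shift q x y \<le> t * (q (y + (s / t) *\<^sub>R x) - (s / t) * q x)"
        using tp by (simp add: mult_left_mono)
      also have "t * (q (y + (s / t) *\<^sub>R x) - (s / t) * q x) = q (t *\<^sub>R (y + (s / t) *\<^sub>R x)) - s * q x"
        by (subst sublin_hom[OF q t]) (use tp in \<open>simp add: algebra_simps\<close>)
      also have "t *\<^sub>R (y + (s / t) *\<^sub>R x) = t *\<^sub>R y + s *\<^sub>R x" using tp by (simp add: algebra_simps)
      finally show "t * hb_shift q x y \<le> q (t *\<^sub>R y + s *\<^sub>R x) - s * q x" .
    qed
    show ?thesis using A B tp by (simp add: divide_le_eq mult.commute antisym)
  qed
qed

definition "hb_FF p = {q. sublin q \<and> (\<forall>x. q x \<le> p x)}"
definition hb_epi :: "('a \<Rightarrow> real) \<Rightarrow> ('a \<times> real) set" where "hb_epi q = {(x,r). q x \<le> r}"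

lemma epi_sub: "hb_epi q \<subseteq> hb_epi q' \<longleftrightarrow> (\<forall>x. q' x \<le> q x)"
proof
  assume "hb_epi q \<subseteq> hb_epi q'"
  hence "(x, q x) \<in> hb_epi q'" for x unfolding hb_epi_def by auto
  thus "\<forall>x. q' x \<le> q x" unfolding hb_epi_def by auto
next
  assume "\<forall>x. q' x \<le> q x"
  thus "hb_epi q \<subseteq> hb_epi q'" unfolding hb_epi_def by (auto intro: order_trans)
qed

lemma epi_inj: "hb_epi q = hb_epi q' \<Longrightarrow> q = q'"
  using epi_sub[of q q'] epi_sub[of q' q] by (auto intro!: antisym simp: le_fun_def)

lemma inf_chain:
  fixes p :: "'a::real_vector \<Rightarrow> real"
  assumes p: "sublin p" and Q: "Q \<subseteq> hb_FF p" "Q \<noteq> {}"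
    and ch: "\<And>q1 q2. q1 \<in> Q \<Longrightarrow> q2 \<in> Q \<Longrightarrow> (\<forall>x. q1 x \<le> q2 x) \<or> (\<forall>x. q2 x \<le> q1 x)"
  defines "m \<equiv> (\<lambda>x. Inf ((\<lambda>q. q x) ` Q))"
  shows "m \<in> hb_FF p" "\<And>q x. q \<in> Q \<Longrightarrow> m x \<le> q x"
proof -
  have sq: "sublin q" if "q \<in> Q" for q using that Q unfolding hb_FF_def by blast
  have qp: "q x \<le> p x" if "q \<in> Q" for q x using that Q unfolding hb_FF_def by blast
  have ne: "(\<lambda>q. q x) ` Q \<noteq> {}" for x using Q by blast
  have bdd: "bdd_below ((\<lambda>q. q x) ` Q)" for x
  proof -
    have "- p (- x) \<le> q x" if "q \<in> Q" for q
      using sublin_neg[OF sq[OF that], of x] qp[OF that, of "-x"] by linarith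
    thus ?thesis unfolding bdd_below_def by blast
  qed
  show low: "m x \<le> q x" if "q \<in> Q" for q x
    unfolding m_def using that bdd by (intro cInf_lower) auto
  have great: "c \<le> m x" if "\<And>q. q \<in> Q \<Longrightarrow> c \<le> q x" for c x
    unfolding m_def using that ne by (intro cInf_greatest) auto
  have appr: "\<exists>q\<in>Q. q x < m x + e" if "e > 0" for x e
  proof -
    have "Inf ((\<lambda>q. q x) ` Q) < m x + e" using that unfolding m_def by simp
    thus ?thesis using cInf_less_iff[OF ne bdd] by blast
  qed
  obtain q0 where q0: "q0 \<in> Q" using Q by blast
  have "sublin m"
  proof (rule sublinI)
    fix x y
    show "m (x + y) \<le> m x + m y"
    proof (rule field_le_epsilon)
      fix e :: real assume e: "e > 0"
      obtain q1 where q1: "q1 \<in> Q" "q1 x < m x + e/2" using appr[of "e/2" x] e by auto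
      obtain q2 where q2: "q2 \<in> Q" "q2 y < m y + e/2" using appr[of "e/2" y] e by auto
      have "\<exists>q\<in>Q. q x \<le> q1 x \<and> q y \<le> q2 y"
        using ch[OF q1(1) q2(1)] q1(1) q2(1) by (metis order_refl)
      then obtain q where q: "q \<in> Q" "q x \<le> q1 x" "q y \<le> q2 y" by blast
      have "m (x + y) \<le> q (x + y)" using low[OF q(1)] .
      also have "\<dots> \<le> q x + q y" using sublin_add[OF sq[OF q(1)]] .
      finally show "m (x + y) \<le> m x + m y + e" using q q1 q2 by linarith
    qed
  next
    fix t :: real and x assume t: "t \<ge> 0"
    show "m (t *\<^sub>R x) = t * m x"
    proof (cases "t = 0")
      case True
      have "m 0 = 0"
      proof (rule antisym)
        show "m 0 \<le> 0" using low[OF q0, of 0] sublin_0[OF sq[OF q0]] by simp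
        show "0 \<le> m 0" by (rule great) (simp add: sublin_0[OF sq])
      qed
      thus ?thesis using True by simp
    next
      case False
      hence tp: "t > 0" using t by simp
      have A: "m (t *\<^sub>R x) / t \<le> m x"
      proof (rule great)
        fix q assume q: "q \<in> Q"
        have "m (t *\<^sub>R x) \<le> t * q x" using low[OF q] sublin_hom[OF sq[OF q] t] by metis
        thus "m (t *\<^sub>R x) / t \<le> q x" using tp by (simp add: divide_le_eq mult.commute)
      qed
      have B: "t * m x \<le> m (t *\<^sub>R x)"
      proof (rule great)
        fix q assume q: "q \<in> Q"
        have "t * m x \<le> t * q x" using low[OF q] tp by (simp add: mult_left_mono)
        thus "t * m x \<le> q (t *\<^sub>R x)" using sublin_hom[OF sq[OF q] t] by simp
      qed
      show ?thesis using A B tp by (simp add: divide_le_eq mult.commute antisym)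
    qed
  qed
  moreover have "m x \<le> p x" for x using low[OF q0] qp[OF q0] order_trans by blast
  ultimately show "m \<in> hb_FF p" unfolding hb_FF_def by blast
qed

lemma min_exists:
  fixes p :: "'a::real_vector \<Rightarrow> real"
  assumes p: "sublin p"
  shows "\<exists>q\<in>hb_FF p. \<forall>q'\<in>hb_FF p. (\<forall>x. q' x \<le> q x) \<longrightarrow> q' = q"
proof -
  let ?A = "hb_epi ` hb_FF p"
  have pF: "p \<in> hb_FF p" unfolding hb_FF_def using p by blast
  have "\<forall>C\<in>chains ?A. \<exists>U\<in>?A. \<forall>X\<in>C. X \<subseteq> U"
  proof
    fix C assume C: "C \<in> chains ?A"
    hence CA: "C \<subseteq> ?A" and chC: "\<And>X Y. X \<in> C \<Longrightarrow> Y \<in> C \<Longrightarrow> X \<subseteq> Y \<or> Y \<subseteq> X"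
      unfolding chains_def chain_subset_def by auto
    show "\<exists>U\<in>?A. \<forall>X\<in>C. X \<subseteq> U"
    proof (cases "C = {}")
      case True thus ?thesis using pF by blast
    next
      case False
      define Q where "Q = {q \<in> hb_FF p. hb_epi q \<in> C}"
      have QF: "Q \<subseteq> hb_FF p" unfolding Q_def by blast
      have Qne: "Q \<noteq> {}" using False CA unfolding Q_def by blast
      have ch: "(\<forall>x. q1 x \<le> q2 x) \<or> (\<forall>x. q2 x \<le> q1 x)" if "q1 \<in> Q" "q2 \<in> Q" for q1 q2
        using chC[of "hb_epi q1" "hb_epi q2"] that unfolding Q_def epi_sub by auto
      define m where "m = (\<lambda>x. Inf ((\<lambda>q. q x) ` Q))"
      have mF: "m \<in> hb_FF p" and ml: "\<And>q x. q \<in> Q \<Longrightarrow> m x \<le> q x"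
        using inf_chain[OF p QF Qne ch] unfolding m_def by blast+
      have "\<forall>X\<in>C. X \<subseteq> hb_epi m"
      proof
        fix X assume X: "X \<in> C"
        then obtain q where q: "q \<in> hb_FF p" "X = hb_epi q" using CA by blast
        hence "q \<in> Q" unfolding Q_def using X by blast
        thus "X \<subseteq> hb_epi m" using q(2) ml epi_sub by blast
      qed
      thus ?thesis using mF by blast
    qed
  qed
  then obtain M where M: "M \<in> ?A" "\<forall>X\<in>?A. M \<subseteq> X \<longrightarrow> X = M" using Zorn_Lemma2[of ?A] by blast
  then obtain q where q: "q \<in> hb_FF p" "M = hb_epi q" by blast
  have "\<forall>q'\<in>hb_FF p. (\<forall>x. q' x \<le> q x) \<longrightarrow> q' = q"
  proof (intro ballI impI)
    fix q' assume q': "q' \<in> hb_FF p" "\<forall>x. q' x \<le> q x"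
    hence "hb_epi q \<subseteq> hb_epi q'" using epi_sub by blast
    hence "hb_epi q' = hb_epi q" using M q q' by blast
    thus "q' = q" by (rule epi_inj)
  qed
  thus ?thesis using q by blast
qed

lemma min_linear:
  fixes p :: "'a::real_vector \<Rightarrow> real"
  assumes qF: "q \<in> hb_FF p" and mn: "\<forall>q'\<in>hb_FF p. (\<forall>x. q' x \<le> q x) \<longrightarrow> q' = q"
  shows "q (x + y) = q x + q y" "q (c *\<^sub>R x) = c * q x"
proof -
  have sq: "sublin q" and qp: "\<And>x. q x \<le> p x" using qF unfolding hb_FF_def by auto
  have sh: "hb_shift q z = q" for z
  proof -
    have "hb_shift q z \<in> hb_FF p" unfolding hb_FF_def
      using shift_sublin[OF sq] shift_le_q[OF sq] qp order_trans by blast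
    thus ?thesis using mn shift_le_q[OF sq] by blast
  qed
  have sup: "q a + q b \<le> q (a + b)" for a b
  proof -
    have "q b = hb_shift q a b" using sh[of a] by simp
    also have "\<dots> \<le> q (b + 1 *\<^sub>R a) - 1 * q a" by (rule shift_le[OF sq]) simp
    finally show ?thesis by (simp add: add.commute)
  qed
  show add: "q (x + y) = q x + q y" using sup[of x y] sublin_add[OF sq, of x y] by simp
  have neg: "q (- a) = - q a" for a using sup[of a "-a"] sublin_0[OF sq] sublin_add[OF sq, of a "-a"] by simp
  show "q (c *\<^sub>R x) = c * q x"
  proof (cases "c \<ge> 0")
    case True thus ?thesis using sublin_hom[OF sq] by blast
  next
    case False
    hence "q (c *\<^sub>R x) = q ((- c) *\<^sub>R (- x))" by simp
    also have "\<dots> = (- c) * q (- x)" by (rule sublin_hom[OF sq]) (use False in simp)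
    finally show ?thesis using neg by simp
  qed
qed

lemma norm_sublin: "sublin (norm :: 'a::real_normed_vector \<Rightarrow> real)"
  by (rule sublinI) (auto simp: norm_triangle_ineq)

theorem hahn_banach:
  fixes w :: "'a::real_normed_vector"
  shows "\<exists>L :: 'a \<Rightarrow>\<^sub>L real. (\<forall>x. \<bar>blinfun_apply L x\<bar> \<le> norm x) \<and> blinfun_apply L w = norm w"
proof -
  let ?p = "hb_shift norm w"
  have sp: "sublin ?p" by (rule shift_sublin[OF norm_sublin])
  obtain q where qF: "q \<in> hb_FF ?p" and mn: "\<forall>q'\<in>hb_FF ?p. (\<forall>x. q' x \<le> q x) \<longrightarrow> q' = q"
    using min_exists[OF sp] by blast
  have qp: "q x \<le> ?p x" for x using qF unfolding hb_FF_def by blast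
  have pn: "?p x \<le> norm x" for x by (rule shift_le_q[OF norm_sublin])
  have add: "q (x + y) = q x + q y" for x y using min_linear(1)[OF qF mn] .
  have hom: "q (c *\<^sub>R x) = c * q x" for c x using min_linear(2)[OF qF mn] .
  have neg: "q (- x) = - q x" for x using hom[of "-1" x] by simp
  have bnd: "\<bar>q x\<bar> \<le> norm x" for x
    using qp[of x] pn[of x] qp[of "-x"] pn[of "-x"] neg[of x] by (simp add: abs_le_iff)
  have bl: "bounded_linear q"
    by (rule bounded_linear_intro[where K=1]) (use add hom bnd in auto)
  have "q (- w) \<le> - norm w" using order_trans[OF qp[of "-w"] shift_neg[OF norm_sublin]] by simp
  hence "q w \<ge> norm w" using neg[of w] by simp
  moreover have "q w \<le> norm w" using bnd[of w] by simp
  ultimately have qw: "q w = norm w" by simp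
  show ?thesis
    by (intro exI[of _ "Blinfun q"]) (simp add: bounded_linear_Blinfun_apply[OF bl] bnd qw)
qed


lemma attain:
  fixes x0 :: "'a::real_normed_vector \<Rightarrow>\<^sub>L real"
  assumes "x0 \<noteq> 0"
  shows "\<exists>z0. norm z0 = 1 \<and> blinfun_apply x0 z0 > norm x0 / 2"
proof (rule ccontr)
  assume "\<not> ?thesis"
  hence A: "\<And>z0. norm z0 = 1 \<Longrightarrow> blinfun_apply x0 z0 \<le> norm x0 / 2" by (meson not_le)
  have "norm (blinfun_apply x0 v) \<le> (norm x0 / 2) * norm v" for v
  proof (cases "v = 0")
    case True thus ?thesis by simp
  next
    case False
    hence nv: "norm v > 0" by simp
    let ?u = "(1 / norm v) *\<^sub>R v"
    have u1: "norm ?u = 1" "norm (- ?u) = 1" using nv by simp_all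
    have "blinfun_apply x0 ?u \<le> norm x0 / 2" "blinfun_apply x0 (- ?u) \<le> norm x0 / 2"
      using A u1 by blast+
    hence "\<bar>blinfun_apply x0 v\<bar> / norm v \<le> norm x0 / 2"
      using nv by (simp add: blinfun.scaleR_right blinfun.minus_right abs_le_iff)
    thus ?thesis using nv by (simp add: divide_le_eq mult.commute)
  qed
  hence "norm x0 \<le> norm x0 / 2" by (intro norm_blinfun_bound) auto
  thus False using assms by simp
qed

lemma lower_construct:
  fixes f g :: "('a::real_normed_vector \<Rightarrow>\<^sub>L real) \<Rightarrow> real"
  assumes fF: "f \<in> FBL" and gF: "g \<in> FBL" and fg: "f \<le> g" and fng: "f \<noteq> g"
  shows "\<exists>c \<rho> \<phi> (v::'a). c > 0 \<and> \<rho> > 0 \<and> v \<noteq> 0 \<and> (\<forall>x::'a. norm x < \<rho> \<longrightarrow> \<phi> x \<in> order_interval f g)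
     \<and> (\<forall>x y::'a. norm x < \<rho> \<longrightarrow> norm y < \<rho> \<longrightarrow> c * dist x y \<le> fbl_dist (\<phi> x) (\<phi> y))"
proof -
  define u where "u = (\<lambda>y. g y - f y)"
  have uF: "u \<in> FBL"
  proof -
    have "(\<lambda>y. g y + (-1) * f y) \<in> FBL" by (rule FBL_add[OF gF FBL_scal[OF fF]])
    moreover have "(\<lambda>y. g y + (-1) * f y) = u" unfolding u_def by simp
    ultimately show ?thesis by simp
  qed
  have uH: "u \<in> H0" using uF FBL_H0 by blast
  have upos: "u y \<ge> 0" for y using fg unfolding u_def le_fun_def by simp
  obtain x0 where "f x0 \<noteq> g x0" using fng by blast
  hence a: "u x0 > 0" using upos[of x0] unfolding u_def by simp
  define a where "a = u x0"
  have apos: "a > 0" using a unfolding a_def .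
  have u0: "u 0 = 0" using uH homog_zero unfolding H0_def by blast
  have x0nz: "x0 \<noteq> 0" using a u0 by auto
  define N where "N = norm x0"
  have Npos: "N > 0" using x0nz unfolding N_def by simp
  have "contf u" by (rule FBL_cont[OF uF])
  then obtain r1 where r1: "r1 > 0" "\<forall>y. dist y x0 < r1 \<longrightarrow> \<bar>u y - u x0\<bar> < a/2"
    unfolding contf_def using apos by (meson half_gt_zero)
  define s where "s = min (r1/2) (N/8)"
  have spos: "s > 0" and sr1: "s < r1" and sN: "s \<le> N/8" unfolding s_def using r1 Npos by auto
  obtain z0 where z0: "norm z0 = 1" "blinfun_apply x0 z0 > N / 2" using attain[OF x0nz] unfolding N_def by blast
  define lam where "lam = a / (4 * (N + s))"
  have lpos: "lam > 0" unfolding lam_def using apos Npos spos by simp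
  define \<rho> where "\<rho> = lam * N / (4 * (N + s))"
  have \<rho>pos: "\<rho> > 0" unfolding \<rho>_def using lpos Npos spos by simp
  have \<rho>lam: "\<rho> \<le> lam / 4"
  proof -
    have "lam * N / (4 * (N + s)) \<le> lam * (N + s) / (4 * (N + s))"
      by (intro divide_right_mono mult_left_mono) (use lpos spos Npos in auto)
    also have "\<dots> = lam / 4"
    proof -
      have "N + s \<noteq> 0" using Npos spos by simp
      thus ?thesis by (simp add: divide_simps)
    qed
    finally show ?thesis unfolding \<rho>_def .
  qed
  define z where "z = lam *\<^sub>R z0"
  have nz: "norm z = lam" unfolding z_def using z0 lpos by simp
  have ev: "0 \<le> blinfun_apply xs (z + x) \<and> blinfun_apply xs (z + x) \<le> a/2"
    if xs: "norm (xs - x0) \<le> s" and x: "norm x < \<rho>" for xs x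
  proof -
    have nxs: "norm xs \<le> N + s" using xs norm_triangle_ineq[of "xs - x0" x0] unfolding N_def by simp
    have e1: "blinfun_apply xs z = blinfun_apply x0 z + blinfun_apply (xs - x0) z" by (simp add: blinfun.diff_left)
    have e2: "\<bar>blinfun_apply (xs - x0) z\<bar> \<le> s * lam"
      using norm_blinfun[of "xs - x0" z] xs nz lpos by (simp add: mult_right_mono order_trans)
    have e3: "blinfun_apply x0 z = lam * blinfun_apply x0 z0" unfolding z_def by (simp add: blinfun.scaleR_right)
    have e4: "\<bar>blinfun_apply xs x\<bar> \<le> (N + s) * \<rho>"
    proof -
      have "\<bar>blinfun_apply xs x\<bar> \<le> norm xs * norm x" using norm_blinfun[of xs x] by simp
      also have "\<dots> \<le> (N + s) * \<rho>" using nxs x Npos spos by (intro mult_mono) auto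
      finally show ?thesis .
    qed
    have e5: "\<bar>blinfun_apply xs z\<bar> \<le> (N + s) * lam"
      using norm_blinfun[of xs z] nxs nz lpos by (simp add: mult_right_mono order_trans)
    have sum: "blinfun_apply xs (z + x) = blinfun_apply xs z + blinfun_apply xs x" by (simp add: blinfun.add_right)
    have low1: "lam * blinfun_apply x0 z0 \<ge> lam * (N/2)" using z0(2) lpos by simp
    have r4: "(N + s) * \<rho> = lam * N / 4" unfolding \<rho>_def using Npos spos by (simp add: field_simps)
    have "blinfun_apply xs (z + x) \<ge> lam * (N/2) - s * lam - lam * N / 4"
      using sum e1 abs_le_D2[OF e2] e3 abs_le_D2[OF e4] low1 r4 by linarith
    moreover have "lam * (N/2) - s * lam - lam * N / 4 \<ge> 0"
    proof -
      have "lam * (N/2) - s * lam - lam * N / 4 = lam * (N/4 - s)" by (simp add: algebra_simps)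
      moreover have "N/4 - s \<ge> 0" using sN Npos by simp
      ultimately show ?thesis using lpos by simp
    qed
    ultimately have g0: "0 \<le> blinfun_apply xs (z + x)" by linarith
    have "(N + s) * \<rho> \<le> (N + s) * lam" using \<rho>lam lpos Npos spos by (intro mult_left_mono) auto
    moreover have "(N + s) * lam = a / 4" unfolding lam_def proof - have "N + s \<noteq> 0" using Npos spos by simp thus "(N + s) * (a / (4 * (N + s))) = a / 4" by (simp add: divide_simps) qed
    ultimately have "blinfun_apply xs (z + x) \<le> a / 2" using sum abs_le_D1[OF e4] abs_le_D1[OF e5] by linarith
    thus ?thesis using g0 by simp
  qed
  define \<phi> where "\<phi> = (\<lambda>x. (\<lambda>y. f y + min (u y) (max (blinfun_apply y (z + x)) 0)))"
  have \<phi>F: "\<phi> x \<in> FBL" for x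
  proof -
    have d: "delta (z + x) \<in> FBL" by (rule FBL_delta)
    have zF: "(\<lambda>y. 0 * delta 0 y) \<in> FBL" by (rule FBL_scal[OF FBL_delta])
    have "(\<lambda>y. max (delta (z + x) y) (0 * delta 0 y)) \<in> FBL" by (rule FBL_max[OF d zF])
    hence "(\<lambda>y. min (u y) (max (delta (z + x) y) (0 * delta 0 y))) \<in> FBL" by (rule FBL_min[OF uF])
    hence "(\<lambda>y. f y + min (u y) (max (delta (z + x) y) (0 * delta 0 y))) \<in> FBL" by (rule FBL_add[OF fF])
    thus ?thesis unfolding \<phi>_def delta_def by simp
  qed
  have \<phi>I: "\<phi> x \<in> order_interval f g" for x
  proof -
    have "f \<le> \<phi> x" unfolding \<phi>_def le_fun_def using upos by simp
    moreover have "\<phi> x \<le> g" unfolding \<phi>_def le_fun_def u_def by (simp add: min_def)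
    ultimately show ?thesis unfolding order_interval_def using \<phi>F by blast
  qed
  have \<phi>ev: "\<phi> x xs - f xs = blinfun_apply xs (z + x)" if "norm (xs - x0) \<le> s" "norm x < \<rho>" for xs x
  proof -
    have "dist xs x0 < r1" using that sr1 by (simp add: dist_norm)
    hence "\<bar>u xs - u x0\<bar> < a/2" using r1 by blast
    hence "u xs > a/2" unfolding a_def by linarith
    thus ?thesis unfolding \<phi>_def using ev[OF that] by simp
  qed
  define c where "c = s / (N + s)"
  have cpos: "c > 0" unfolding c_def using spos Npos by simp
  have bi: "c * dist x y \<le> fbl_dist (\<phi> x) (\<phi> y)" if x: "norm x < \<rho>" and y: "norm y < \<rho>" for x y
  proof (cases "x = y")
    case True thus ?thesis by (simp add: fbl_dist_self)
  next
    case False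
    define w where "w = x - y"
    obtain L :: "'a \<Rightarrow>\<^sub>L real" where L: "\<forall>v. \<bar>blinfun_apply L v\<bar> \<le> norm v" "blinfun_apply L w = norm w"
      using hahn_banach by blast
    have nL: "norm L \<le> 1" by (rule norm_blinfun_bound) (use L in auto)
    define xp where "xp = x0 + s *\<^sub>R L"
    define xm where "xm = x0 - s *\<^sub>R L"
    have dp: "norm (xp - x0) \<le> s" unfolding xp_def using nL spos by (simp add: mult_left_le)
    have dm: "norm (xm - x0) \<le> s" unfolding xm_def using nL spos by (simp add: mult_left_le)
    have np: "norm xp \<le> N + s" using dp norm_triangle_ineq[of "xp - x0" x0] unfolding N_def by simp
    have nm: "norm xm \<le> N + s" using dm norm_triangle_ineq[of "xm - x0" x0] unfolding N_def by simp
    have H: "\<phi> x \<in> H0" "\<phi> y \<in> H0" using \<phi>F FBL_H0 by blast+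
    have vp: "\<phi> x xp - \<phi> y xp = blinfun_apply x0 w + s * norm w"
    proof -
      have "\<phi> x xp - \<phi> y xp = blinfun_apply xp (z + x) - blinfun_apply xp (z + y)"
        using \<phi>ev[OF dp x] \<phi>ev[OF dp y] by linarith
      also have "\<dots> = blinfun_apply xp w" unfolding w_def by (simp add: blinfun.diff_right blinfun.add_right)
      also have "\<dots> = blinfun_apply x0 w + s * norm w" unfolding xp_def using L(2) by (simp add: blinfun.add_left blinfun.scaleR_left)
      finally show ?thesis .
    qed
    have vm: "\<phi> x xm - \<phi> y xm = blinfun_apply x0 w - s * norm w"
    proof -
      have "\<phi> x xm - \<phi> y xm = blinfun_apply xm (z + x) - blinfun_apply xm (z + y)"
        using \<phi>ev[OF dm x] \<phi>ev[OF dm y] by linarith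
      also have "\<dots> = blinfun_apply xm w" unfolding w_def by (simp add: blinfun.diff_right blinfun.add_right)
      also have "\<dots> = blinfun_apply x0 w - s * norm w" unfolding xm_def using L(2) by (simp add: blinfun.diff_left blinfun.scaleR_left)
      finally show ?thesis .
    qed
    define D where "D = fbl_dist (\<phi> x) (\<phi> y)"
    have D0: "D \<ge> 0" unfolding D_def using fbl_dist_nonneg[OF H] .
    have bp: "\<bar>\<phi> x xp - \<phi> y xp\<bar> \<le> D * (N + s)"
      using fbl_dist_point[OF H, of xp] np D0 unfolding D_def by (meson mult_left_mono order_trans)
    have bm: "\<bar>\<phi> x xm - \<phi> y xm\<bar> \<le> D * (N + s)"
      using fbl_dist_point[OF H, of xm] nm D0 unfolding D_def by (meson mult_left_mono order_trans)
    have "s * norm w \<le> D * (N + s)"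
    proof (cases "blinfun_apply x0 w \<ge> 0")
      case True thus ?thesis using abs_le_D1[OF bp] vp spos by linarith
    next
      case False thus ?thesis using abs_le_D2[OF bm] vm spos by linarith
    qed
    hence "s / (N + s) * norm w \<le> D" using Npos spos by (simp add: field_simps)
    thus ?thesis unfolding c_def D_def w_def by (simp add: dist_norm)
  qed
  have "z0 \<noteq> 0" using z0 by auto
  have "0 < c \<and> 0 < \<rho> \<and> z0 \<noteq> 0 \<and> (\<forall>x. norm x < \<rho> \<longrightarrow> \<phi> x \<in> order_interval f g) \<and>
     (\<forall>x y. norm x < \<rho> \<longrightarrow> norm y < \<rho> \<longrightarrow> c * dist x y \<le> fbl_dist (\<phi> x) (\<phi> y))"
    using cpos \<rho>pos \<phi>I bi \<open>z0 \<noteq> 0\<close> by simp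
  thus ?thesis by (intro exI[of _ c] exI[of _ \<rho>] exI[of _ \<phi>] exI[of _ z0])
qed


theorem theorem3p2:
  fixes f g :: "('a::banach \<Rightarrow>\<^sub>L real) \<Rightarrow> real"
  assumes "f \<in> FBL" and "g \<in> FBL" and "f \<le> g" and "f \<noteq> g"
  shows "same_density fbl_dist (order_interval f g) dist (UNIV :: 'a set)"
proof -
  obtain c \<rho> \<phi> and v :: 'a where cp: "c > 0" and rp: "\<rho> > 0" and vnz: "v \<noteq> 0"
    and \<phi>I: "\<forall>x::'a. norm x < \<rho> \<longrightarrow> \<phi> x \<in> order_interval f g"
    and bi: "\<forall>x y::'a. norm x < \<rho> \<longrightarrow> norm y < \<rho> \<longrightarrow> c * dist x y \<le> fbl_dist (\<phi> x) (\<phi> y)"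
    using lower_construct[OF assms] by blast
  define I where "I = order_interval f g"
  have IF: "I \<subseteq> FBL" unfolding I_def order_interval_def by blast
  have IH: "I \<subseteq> H0" using IF FBL_H0 by blast
  obtain DI where DI: "density_witness fbl_dist I DI"
    using witness_exists[of I fbl_dist] fbl_dist_self by blast
  obtain DE where DE: "density_witness dist (UNIV::'a set) DE"
    using witness_exists[of "UNIV::'a set" dist] by auto
  have DIdense: "dense_wrt fbl_dist I DI" and DEdense: "dense_wrt dist (UNIV::'a set) DE"
    using DI DE unfolding density_witness_def by auto
  define B where "B = {x::'a. norm x < \<rho>}"
  have nv: "norm v > 0" using vnz by simp
  have Binf: "\<not> finite B"
  proof
    assume fin: "finite B"
    have "(\<lambda>t::real. t *\<^sub>R v) ` {0<..<\<rho> / norm v} \<subseteq> B"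
      unfolding B_def using nv by (auto simp: field_simps)
    moreover have "inj_on (\<lambda>t::real. t *\<^sub>R v) {0<..<\<rho> / norm v}"
      using vnz by (auto simp: inj_on_def)
    ultimately have "finite {0<..<\<rho> / norm v}"
      using fin finite_subset finite_imageD by metis
    moreover have "\<rho> / norm v > 0" using rp nv by simp
    ultimately show False using infinite_Ioo[of 0 "\<rho> / norm v"] by simp
  qed
  have Einf: "\<not> finite (UNIV :: 'a set)" using Binf finite_subset[of B UNIV] by auto
  have DEinf: "\<not> finite DE"
  proof
    assume "finite DE"
    hence "UNIV \<subseteq> DE" using finite_dense[OF DEdense] by simp
    thus False using Einf \<open>finite DE\<close> finite_subset[of UNIV DE] by auto
  qed
  have \<phi>B: "\<phi> ` B \<subseteq> I" unfolding B_def I_def using \<phi>I by blast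
  have bi': "c * dist x y \<le> fbl_dist (\<phi> x) (\<phi> y)" if "x \<in> B" "y \<in> B" for x y
    using bi that unfolding B_def by blast
  have injB: "inj_on \<phi> B"
  proof (rule inj_onI)
    fix x y assume "x \<in> B" "y \<in> B" "\<phi> x = \<phi> y"
    hence "c * dist x y \<le> 0" using bi'[of x y] fbl_dist_self[of "\<phi> x"] by simp
    thus "x = y" using cp by (simp add: mult_le_0_iff)
  qed
  have Iinf: "\<not> finite I"
  proof
    assume "finite I"
    hence "finite (\<phi> ` B)" using \<phi>B finite_subset[of "\<phi> ` B" I] by auto
    thus False using Binf finite_imageD[OF _ injB] by auto
  qed
  have DIinf: "\<not> finite DI"
  proof
    assume fin: "finite DI"
    have "I \<subseteq> DI" using finite_dense[OF DIdense fin] fbl_dist_pos IH by blast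
    thus False using Iinf fin finite_subset[of I DI] by auto
  qed
  obtain D' where D': "dense_wrt fbl_dist I D'" "|D'| \<le>o |DE|"
    using upper_bound[OF DEdense DEinf IF] by blast
  have le1: "|DI| \<le>o |DE|" using witness_min[OF DI D'(1)] D'(2) ordLeq_transitive by blast
  have tri: "fbl_dist x y \<le> fbl_dist x z + fbl_dist y z" if "x \<in> I" "y \<in> I" "z \<in> I" for x y z
    using fbl_dist_tri_H0[of x y z] fbl_dist_sym[of z y] that IH by auto
  obtain T where T: "T \<subseteq> B" "\<forall>x\<in>B. \<forall>e>0. \<exists>y\<in>T. dist x y < e" "|T| \<le>o |DI \<times> (UNIV::nat set)|"
    using pullback[OF cp bi' \<phi>B DIdense tri] by blast
  define T' where "T' = (\<lambda>(k::nat, t). real k *\<^sub>R t) ` (UNIV \<times> T)"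
  have T'dense: "dense_wrt dist (UNIV::'a set) T'"
    unfolding dense_wrt_def
  proof (intro conjI ballI allI impI)
    show "T' \<subseteq> UNIV" by simp
    fix x :: 'a and e :: real assume e: "e > 0"
    obtain n :: nat where n: "norm x / \<rho> < real n" using reals_Archimedean2 by blast
    define k where "k = Suc n"
    have kpos: "real k > 0" unfolding k_def by simp
    have "norm x < real n * \<rho>" using n rp by (simp add: divide_less_eq)
    moreover have "real n * \<rho> \<le> real k * \<rho>" using rp unfolding k_def by simp
    ultimately have "norm x < real k * \<rho>" by linarith
    hence yB: "(1 / real k) *\<^sub>R x \<in> B" unfolding B_def using kpos by (simp add: divide_less_eq mult.commute)
    have "e / real k > 0" using e kpos by simp
    then obtain t where t: "t \<in> T" "dist ((1 / real k) *\<^sub>R x) t < e / real k" using T(2) yB by blast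
    have "dist x (real k *\<^sub>R t) = real k * dist ((1 / real k) *\<^sub>R x) t"
    proof -
      have "x - real k *\<^sub>R t = real k *\<^sub>R ((1 / real k) *\<^sub>R x - t)" using kpos by (simp add: algebra_simps)
      thus ?thesis unfolding dist_norm using kpos by simp
    qed
    also have "\<dots> < real k * (e / real k)" using t(2) kpos by (intro mult_strict_left_mono) auto
    also have "\<dots> = e" using kpos by simp
    finally have "dist x (real k *\<^sub>R t) < e" .
    moreover have "real k *\<^sub>R t \<in> T'" unfolding T'_def using t(1) by force
    ultimately show "\<exists>y\<in>T'. dist x y < e" by blast
  qed
  have "|T'| \<le>o |(UNIV::nat set) \<times> T|" unfolding T'_def by (rule card_of_image)
  also have "|(UNIV::nat set) \<times> T| \<le>o |(UNIV::nat set) \<times> (DI \<times> (UNIV::nat set))|"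
    by (rule card_of_Times_mono2[OF T(3)])
  also have "|(UNIV::nat set) \<times> (DI \<times> (UNIV::nat set))| \<le>o |DI|"
    by (rule times_le[OF DIinf infinite_iff_card_of_nat[THEN iffD1, OF DIinf] nat_times_le[OF DIinf]])
  finally have T'c: "|T'| \<le>o |DI|" .
  have le2: "|DE| \<le>o |DI|" using witness_min[OF DE T'dense] T'c ordLeq_transitive by blast
  have "|DI| =o |DE|" using le1 le2 ordIso_iff_ordLeq by blast
  thus ?thesis unfolding same_density_def I_def[symmetric] using DI DE by blast
qed


end
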